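(* For any sign string $S$ and any state string $J$ of the same length, the web produced by the growth algorithm applied to $(S,J)$ does not depend on the order in which the replacements are performed.
   Context: A sign string is $S=(s_1,\dots,s_n)\in\{+,-\}^n$ and a state string is $J=(j_1,\dots,j_n)\in\{-1,0,1\}^n$. The growth algorithm builds an oriented planar graph downward from $n$ parallel strands (the $k$-th strand oriented upward toward its top endpoint if $s_k=+$ and downward if $s_k=-$), keeping a current pair (sign string, state string) describing the strands hanging at the bottom. A replacement acts on two adjacent positions $k,k+1$ with current signs $(s,s')$ and states $(j,j')$: (a) If $s'\ne s$: if $(j,j')=(1,0)$, $(0,0)$ or $(0,-1)$, attach an "H" (two trivalent vertices joined by a horizontal edge, the left vertex joined to strand $k$ above and to a new strand below, the right vertex likewise for strand $k+1$); the new signs at positions $k,k+1$ are $(s',s)$ and the new states are respectively $(0,1)$, $(-1,1)$, $(-1,0)$. If $(j,j')=(1,-1)$, join the two strands by a cup and delete both positions. (b) If $s'=s$: if $(j,j')=(1,0)$, $(0,-1)$ or $(1,-1)$, attach a "Y" (the two strands meet at a trivalent vertex whose third edge continues downward as a single strand); the two positions are replaced by one position with sign opposite to $s$ and state respectively $1$, $-1$, $0$. All trivalent vertices created are sources or sinks (all edges in or all out), consistently with the orientations. The algorithm repeatedly applies some applicable replacement and stops when none applies; the output is the graph built together with the remaining sign and state strings. *)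

theory Defs
  imports Main
begin

(* Signs: True = '+', False = '-'.  States: integers in {-1,0,1}.

   A web is encoded as a combinatorial map (rotation system) on a finite
   set of darts (half-edges), with orientation and boundary labels:
     darts : the set of darts
     wopp  : fixed-point-free involution pairing the two darts of an edge
     wnxt  : permutation whose cycles are the vertices (cyclic
             counterclockwise order of the edges at that vertex)
     wout  : True iff the edge of this dart is oriented away from its vertex
     wlab  : boundary points (univalent vertices) carry a label: the k-th
             top endpoint (0-based) or the i-th bottom endpoint (0-based,
             left to right); internal vertices carry None. *)

datatype bpt = TopPt nat | BotPt nat

record web =
  darts :: "nat set"
  wopp :: "nat \<Rightarrow> nat"
  wnxt :: "nat \<Rightarrow> nat"
  wout :: "nat \<Rightarrow> bool"
  wlab :: "nat \<Rightarrow> bpt option"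

(* Two webs are the same (planar isotopy rel boundary) iff there is an
   isomorphism of oriented labelled combinatorial maps. *)
definition web_iso :: "web \<Rightarrow> web \<Rightarrow> bool" where
  "web_iso W1 W2 \<longleftrightarrow> (\<exists>f. bij_betw f (darts W1) (darts W2) \<and>
     (\<forall>d\<in>darts W1. f (wopp W1 d) = wopp W2 (f d) \<and> f (wnxt W1 d) = wnxt W2 (f d)
        \<and> wout W2 (f d) = wout W1 d \<and> wlab W2 (f d) = wlab W1 d))"

(* Configuration of the growth algorithm.  strs is the list of strands
   hanging at the bottom, each given as (current sign, current state,
   dart at the upper end of the strand).  Darts 0..<cnt have been created;
   the partial map is stored in copp/cnxt/cout/clab. *)
record cfg =
  strs :: "(bool \<times> int \<times> nat) list"
  cnt :: nat
  copp :: "nat \<Rightarrow> nat"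
  cnxt :: "nat \<Rightarrow> nat"
  cout :: "nat \<Rightarrow> bool"
  clab :: "nat \<Rightarrow> bpt option"

(* Initial configuration: n top endpoints, dart k for the k-th one.
   Strand k oriented upward (toward the top point) iff s_k = +, so the
   edge points away from the top point iff s_k = -. *)
definition ginit :: "bool list \<Rightarrow> int list \<Rightarrow> cfg" where
  "ginit S J = \<lparr> strs = zip S (zip J [0..<length S]), cnt = length S,
     copp = id, cnxt = id, cout = (\<lambda>d. if d < length S then \<not> S ! d else False),
     clab = (\<lambda>d. if d < length S then Some (TopPt d) else None) \<rparr>"

(* One replacement of the growth algorithm at adjacent positions
   k = length xs, k+1.  Counterclockwise rotations:
   Y vertex: upper-right -> upper-left -> down;
   H left vertex: right -> up -> down;  H right vertex: up -> left -> down. *)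
inductive gstep :: "cfg \<Rightarrow> cfg \<Rightarrow> bool" where
  H: "strs c = xs @ (s, j, d) # (s', j', d') # ys \<Longrightarrow> s' \<noteq> s \<Longrightarrow>
      (j, j', nj, nj') \<in> {(1, 0, 0, 1), (0, 0, -1, 1), (0, -1, -1, 0)} \<Longrightarrow> N = cnt c \<Longrightarrow>
      gstep c (c\<lparr> strs := xs @ (s', nj, N + 2) # (s, nj', N + 5) # ys,
                  cnt := N + 6,
                  copp := (copp c)(d := N, N := d, d' := N + 3, N + 3 := d',
                                   N + 1 := N + 4, N + 4 := N + 1),
                  cnxt := (cnxt c)(N + 1 := N, N := N + 2, N + 2 := N + 1,
                                   N + 3 := N + 4, N + 4 := N + 5, N + 5 := N + 3),
                  cout := (cout c)(N := s, N + 1 := s, N + 2 := s,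
                                   N + 3 := s', N + 4 := s', N + 5 := s'),
                  clab := (clab c)(N := None, N + 1 := None, N + 2 := None,
                                   N + 3 := None, N + 4 := None, N + 5 := None) \<rparr>)"
| Cup: "strs c = xs @ (s, j, d) # (s', j', d') # ys \<Longrightarrow> s' \<noteq> s \<Longrightarrow>
      (j, j') = (1, -1) \<Longrightarrow>
      gstep c (c\<lparr> strs := xs @ ys, copp := (copp c)(d := d', d' := d) \<rparr>)"
| Y: "strs c = xs @ (s, j, d) # (s', j', d') # ys \<Longrightarrow> s' = s \<Longrightarrow>
      (j, j', nj) \<in> {(1, 0, 1), (0, -1, -1), (1, -1, 0)} \<Longrightarrow> N = cnt c \<Longrightarrow>
      gstep c (c\<lparr> strs := xs @ (\<not> s, nj, N + 2) # ys,
                  cnt := N + 3,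
                  copp := (copp c)(d := N, N := d, d' := N + 1, N + 1 := d'),
                  cnxt := (cnxt c)(N + 1 := N, N := N + 2, N + 2 := N + 1),
                  cout := (cout c)(N := s, N + 1 := s, N + 2 := s),
                  clab := (clab c)(N := None, N + 1 := None, N + 2 := None) \<rparr>)"

definition gfinal :: "cfg \<Rightarrow> bool" where
  "gfinal c \<longleftrightarrow> \<not> (\<exists>c'. gstep c c')"

definition close_web :: "cfg \<Rightarrow> web" where
  "close_web c = (let N = cnt c; m = length (strs c) in
     foldr (\<lambda>(i, (s, j, d)) W.
              W\<lparr> wopp := (wopp W)(d := N + i, N + i := d),
                  wnxt := (wnxt W)(N + i := N + i),
                  wout := (wout W)(N + i := s),
                  wlab := (wlab W)(N + i := Some (BotPt i)) \<rparr>)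
           (zip [0..<m] (strs c))
           \<lparr> darts = {..<N + m}, wopp = copp c, wnxt = cnxt c,
             wout = cout c, wlab = clab c \<rparr>)"

end

theory Submission
  imports Defs
begin

definition Hm :: "bool \<Rightarrow> nat \<Rightarrow> bool \<Rightarrow> nat \<Rightarrow> cfg \<Rightarrow> cfg" where
  "Hm s d s' d' c = (let N = cnt c in c\<lparr> cnt := N + 6,
                  copp := (copp c)(d := N, N := d, d' := N + 3, N + 3 := d',
                                   N + 1 := N + 4, N + 4 := N + 1),
                  cnxt := (cnxt c)(N + 1 := N, N := N + 2, N + 2 := N + 1,
                                   N + 3 := N + 4, N + 4 := N + 5, N + 5 := N + 3),
                  cout := (cout c)(N := s, N + 1 := s, N + 2 := s,
                                   N + 3 := s', N + 4 := s', N + 5 := s'),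
                  clab := (clab c)(N := None, N + 1 := None, N + 2 := None,
                                   N + 3 := None, N + 4 := None, N + 5 := None) \<rparr>)"

definition Ym :: "bool \<Rightarrow> nat \<Rightarrow> nat \<Rightarrow> cfg \<Rightarrow> cfg" where
  "Ym s d d' c = (let N = cnt c in c\<lparr> cnt := N + 3,
                  copp := (copp c)(d := N, N := d, d' := N + 1, N + 1 := d'),
                  cnxt := (cnxt c)(N + 1 := N, N := N + 2, N + 2 := N + 1),
                  cout := (cout c)(N := s, N + 1 := s, N + 2 := s),
                  clab := (clab c)(N := None, N + 1 := None, N + 2 := None) \<rparr>)"

definition Cm :: "nat \<Rightarrow> nat \<Rightarrow> cfg \<Rightarrow> cfg" where
  "Cm d d' c = c\<lparr> copp := (copp c)(d := d', d' := d) \<rparr>"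

definition Hres :: "(bool \<times> int \<times> nat) list \<Rightarrow> bool \<Rightarrow> nat \<Rightarrow> bool \<Rightarrow> nat \<Rightarrow> (bool \<times> int \<times> nat) list \<Rightarrow> int \<Rightarrow> int \<Rightarrow> cfg \<Rightarrow> cfg" where
  "Hres xs s d s' d' ys nj nj' c = (let N = cnt c in
      c\<lparr> strs := xs @ (s', nj, N + 2) # (s, nj', N + 5) # ys,
                  cnt := N + 6,
                  copp := (copp c)(d := N, N := d, d' := N + 3, N + 3 := d',
                                   N + 1 := N + 4, N + 4 := N + 1),
                  cnxt := (cnxt c)(N + 1 := N, N := N + 2, N + 2 := N + 1,
                                   N + 3 := N + 4, N + 4 := N + 5, N + 5 := N + 3),
                  cout := (cout c)(N := s, N + 1 := s, N + 2 := s,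
                                   N + 3 := s', N + 4 := s', N + 5 := s'),
                  clab := (clab c)(N := None, N + 1 := None, N + 2 := None,
                                   N + 3 := None, N + 4 := None, N + 5 := None) \<rparr>)"
definition Cres :: "(bool \<times> int \<times> nat) list \<Rightarrow> nat \<Rightarrow> nat \<Rightarrow> (bool \<times> int \<times> nat) list \<Rightarrow> cfg \<Rightarrow> cfg" where
  "Cres xs d d' ys c = c\<lparr> strs := xs @ ys, copp := (copp c)(d := d', d' := d) \<rparr>"
definition Yres :: "(bool \<times> int \<times> nat) list \<Rightarrow> bool \<Rightarrow> nat \<Rightarrow> nat \<Rightarrow> (bool \<times> int \<times> nat) list \<Rightarrow> int \<Rightarrow> cfg \<Rightarrow> cfg" where
  "Yres xs s d d' ys nj c = (let N = cnt c in
      c\<lparr> strs := xs @ (\<not> s, nj, N + 2) # ys,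
                  cnt := N + 3,
                  copp := (copp c)(d := N, N := d, d' := N + 1, N + 1 := d'),
                  cnxt := (cnxt c)(N + 1 := N, N := N + 2, N + 2 := N + 1),
                  cout := (cout c)(N := s, N + 1 := s, N + 2 := s),
                  clab := (clab c)(N := None, N + 1 := None, N + 2 := None) \<rparr>)"

lemma Hres_Hm: "Hres xs s d s' d' ys nj nj' c = (Hm s d s' d' c)\<lparr>strs := xs @ (s', nj, cnt c + 2) # (s, nj', cnt c + 5) # ys\<rparr>"
  by (simp add: Hres_def Hm_def Let_def)
lemma Yres_Ym: "Yres xs s d d' ys nj c = (Ym s d d' c)\<lparr>strs := xs @ (\<not> s, nj, cnt c + 2) # ys\<rparr>"
  by (simp add: Yres_def Ym_def Let_def)
lemma Cres_Cm: "Cres xs d d' ys c = (Cm d d' c)\<lparr>strs := xs @ ys\<rparr>"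
  by (simp add: Cres_def Cm_def)


lemma Hres_sel[simp]:
  "strs (Hres xs s d s' d' ys nj nj' c) = xs @ (s', nj, cnt c + 2) # (s, nj', cnt c + 5) # ys"
  "cnt (Hres xs s d s' d' ys nj nj' c) = cnt c + 6"
  "copp (Hres xs s d s' d' ys nj nj' c) = (copp c)(d := cnt c, cnt c := d, d' := cnt c + 3, cnt c + 3 := d',
                                   cnt c + 1 := cnt c + 4, cnt c + 4 := cnt c + 1)"
  "cnxt (Hres xs s d s' d' ys nj nj' c) = (cnxt c)(cnt c + 1 := cnt c, cnt c := cnt c + 2, cnt c + 2 := cnt c + 1,
                                   cnt c + 3 := cnt c + 4, cnt c + 4 := cnt c + 5, cnt c + 5 := cnt c + 3)"
  "cout (Hres xs s d s' d' ys nj nj' c) = (cout c)(cnt c := s, cnt c + 1 := s, cnt c + 2 := s,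
                                   cnt c + 3 := s', cnt c + 4 := s', cnt c + 5 := s')"
  "clab (Hres xs s d s' d' ys nj nj' c) = (clab c)(cnt c := None, cnt c + 1 := None, cnt c + 2 := None,
                                   cnt c + 3 := None, cnt c + 4 := None, cnt c + 5 := None)"
  by (simp_all add: Hres_def Let_def)

lemma Yres_sel[simp]:
  "strs (Yres xs s d d' ys nj c) = xs @ (\<not> s, nj, cnt c + 2) # ys"
  "cnt (Yres xs s d d' ys nj c) = cnt c + 3"
  "copp (Yres xs s d d' ys nj c) = (copp c)(d := cnt c, cnt c := d, d' := cnt c + 1, cnt c + 1 := d')"
  "cnxt (Yres xs s d d' ys nj c) = (cnxt c)(cnt c + 1 := cnt c, cnt c := cnt c + 2, cnt c + 2 := cnt c + 1)"
  "cout (Yres xs s d d' ys nj c) = (cout c)(cnt c := s, cnt c + 1 := s, cnt c + 2 := s)"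
  "clab (Yres xs s d d' ys nj c) = (clab c)(cnt c := None, cnt c + 1 := None, cnt c + 2 := None)"
  by (simp_all add: Yres_def Let_def)

lemma Cres_sel[simp]:
  "strs (Cres xs d d' ys c) = xs @ ys"
  "cnt (Cres xs d d' ys c) = cnt c"
  "copp (Cres xs d d' ys c) = (copp c)(d := d', d' := d)"
  "cnxt (Cres xs d d' ys c) = cnxt c"
  "cout (Cres xs d d' ys c) = cout c"
  "clab (Cres xs d d' ys c) = clab c"
  by (simp_all add: Cres_def)

lemma all_less_add: "(\<forall>x<N+K. P x) = ((\<forall>x<N. P x) \<and> (\<forall>k<K. P (N+(k::nat))))"
  apply auto
  by (metis add_diff_inverse_nat nat_add_left_cancel_less)
lemma all3: "(\<forall>k<(3::nat). P k) = (P 0 \<and> P 1 \<and> P 2)"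
  apply (simp add: numeral_eq_Suc All_less_Suc) by blast
lemma all6: "(\<forall>k<(6::nat). P k) = (P 0 \<and> P 1 \<and> P 2 \<and> P 3 \<and> P 4 \<and> P 5)"
  apply (simp add: numeral_eq_Suc All_less_Suc) by blast
lemma all9: "(\<forall>k<(9::nat). P k) = (P 0 \<and> P 1 \<and> P 2 \<and> P 3 \<and> P 4 \<and> P 5 \<and> P 6 \<and> P 7 \<and> P 8)"
  apply (simp add: numeral_eq_Suc All_less_Suc) by blast
lemma all12: "(\<forall>k<(12::nat). P k) = (P 0 \<and> P 1 \<and> P 2 \<and> P 3 \<and> P 4 \<and> P 5 \<and> P 6 \<and> P 7 \<and> P 8 \<and> P 9 \<and> P 10 \<and> P 11)"
  apply (simp add: numeral_eq_Suc All_less_Suc) by blast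

definition HS :: "(int \<times> int \<times> int \<times> int) set" where
  "HS = {(1, 0, 0, 1), (0, 0, -1, 1), (0, -1, -1, 0)}"
definition YS :: "(int \<times> int \<times> int) set" where
  "YS = {(1, 0, 1), (0, -1, -1), (1, -1, 0)}"

lemma gstep_iff: "gstep c c' \<longleftrightarrow> (\<exists>xs s j d s' j' d' ys. strs c = xs @ (s,j,d) # (s',j',d') # ys \<and>
   ((s' \<noteq> s \<and> (\<exists>nj nj'. (j,j',nj,nj') \<in> HS \<and> c' = Hres xs s d s' d' ys nj nj' c)) \<or>
    (s' \<noteq> s \<and> j = 1 \<and> j' = -1 \<and> c' = Cres xs d d' ys c) \<or>
    (s' = s \<and> (\<exists>nj. (j,j',nj) \<in> YS \<and> c' = Yres xs s d d' ys nj c))))" (is "?lhs = ?rhs")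
proof
  assume "gstep c c'"
  then show "?rhs"
  proof cases
    case (H xs s j d s' j' d' ys nj nj' N)
    have "c' = Hres xs s d s' d' ys nj nj' c" using H by (simp add: Hres_def Let_def)
    moreover have "(j,j',nj,nj') \<in> HS" using H by (auto simp: HS_def)
    ultimately show ?thesis using H(2,3) by blast
  next
    case (Cup xs s j d s' j' d' ys)
    then show ?thesis
      apply (rule_tac x=xs in exI, rule_tac x=s in exI, rule_tac x=j in exI, rule_tac x=d in exI)
      apply (rule_tac x=s' in exI, rule_tac x=j' in exI, rule_tac x=d' in exI, rule_tac x=ys in exI)
      apply (simp add: Cres_def Cm_def)
      done
  next
    case (Y xs s j d s' j' d' ys nj N)
    have "c' = Yres xs s d d' ys nj c" using Y by (simp add: Yres_def Let_def)
    moreover have "(j,j',nj) \<in> YS" using Y by (auto simp: YS_def)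
    ultimately show ?thesis using Y(2,3) by blast
  qed
next
  assume "?rhs"
  then obtain xs s j d s' j' d' ys where st: "strs c = xs @ (s,j,d) # (s',j',d') # ys" and
   r: "((s' \<noteq> s \<and> (\<exists>nj nj'. (j,j',nj,nj') \<in> HS \<and> c' = Hres xs s d s' d' ys nj nj' c)) \<or>
    (s' \<noteq> s \<and> j = 1 \<and> j' = -1 \<and> c' = Cres xs d d' ys c) \<or>
    (s' = s \<and> (\<exists>nj. (j,j',nj) \<in> YS \<and> c' = Yres xs s d d' ys nj c)))" by blast
  from r show "gstep c c'"
  proof (elim disjE conjE exE)
    fix nj nj' assume "s' \<noteq> s" "(j,j',nj,nj') \<in> HS" "c' = Hres xs s d s' d' ys nj nj' c"
    then show ?thesis using gstep.H[OF st, of nj nj' "cnt c"] by (simp add: HS_def Hres_def Let_def)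
  next
    assume "s' \<noteq> s" "j = 1" "j' = -1" "c' = Cres xs d d' ys c"
    then show ?thesis using gstep.Cup[OF st] by (simp add: Cres_def)
  next
    fix nj assume "s' = s" "(j,j',nj) \<in> YS" "c' = Yres xs s d d' ys nj c"
    then show ?thesis using gstep.Y[OF st, of nj "cnt c"] by (simp add: YS_def Yres_def Let_def)
  qed
qed

definition dartof :: "bool \<times> int \<times> nat \<Rightarrow> nat" where "dartof x = snd (snd x)"
definition opn :: "cfg \<Rightarrow> nat set" where "opn c = dartof ` set (strs c)"

definition ginv :: "cfg \<Rightarrow> bool" where
  "ginv c \<longleftrightarrow> distinct (map dartof (strs c)) \<and> (\<forall>x\<in>opn c. x < cnt c)
     \<and> (\<forall>x<cnt c. copp c x < cnt c \<and> cnxt c x < cnt c)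
     \<and> (\<forall>x. (x \<in> opn c \<or> cnt c \<le> x) \<longrightarrow> copp c x = x)
     \<and> (\<forall>e\<in>set (strs c). fst (snd e) \<in> {-1,0,1})"

lemma dartof_simp[simp]: "dartof (s,j,d) = d" by (simp add: dartof_def)

lemma ginv_init: "length S = length J \<Longrightarrow> set J \<subseteq> {-1,0,1} \<Longrightarrow> ginv (ginit S J)"
proof -
  assume l: "length S = length J" and j: "set J \<subseteq> {-1,0,1}"
  have m: "map dartof (zip S (zip J [0..<length S])) = [0..<length S]"
  proof -
    have "map dartof (zip S (zip J [0..<length S])) = map snd (map snd (zip S (zip J [0..<length S])))"
      by (simp add: dartof_def)
    also have "\<dots> = [0..<length S]" using l by simp
    finally show ?thesis .
  qed
  have st: "\<forall>e\<in>set (zip S (zip J [0..<length S])). fst (snd e) \<in> {-1,0,1}"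
  proof -
    have "\<forall>e\<in>set (zip S (zip J [0..<length S])). fst (snd e) \<in> set J"
      by (force simp: in_set_zip)
    then show ?thesis using j by blast
  qed
  show ?thesis unfolding ginv_def opn_def ginit_def
    using m st by (simp add: image_set) 
qed

lemma ginv_H:
  assumes st: "strs c = xs @ (s,j,d) # (s',j',d') # ys" and g: "ginv c"
    and nj: "nj \<in> {-1,0,1}" "nj' \<in> {-1,0,1}"
  shows "ginv (Hres xs s d s' d' ys nj nj' c)"
proof -
  let ?N = "cnt c"
  from g st have dist: "distinct (map dartof xs @ d # d' # map dartof ys)"
    and lt: "\<forall>x\<in>dartof ` set xs. x < ?N" "\<forall>x\<in>dartof ` set ys. x < ?N" "d < ?N" "d' < ?N"
    and cl: "\<forall>x<?N. copp c x < ?N \<and> cnxt c x < ?N"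
    and fx: "\<forall>x. (x \<in> opn c \<or> ?N \<le> x) \<longrightarrow> copp c x = x"
    and ss: "\<forall>e\<in>set (strs c). fst (snd e) \<in> {-1,0,1}"
    by (auto simp: ginv_def opn_def)
  have o: "opn c = dartof ` set xs \<union> {d, d'} \<union> dartof ` set ys" using st by (auto simp: opn_def)
  show ?thesis
    unfolding ginv_def opn_def Hres_sel
  proof (intro conjI)
    show "distinct (map dartof (xs @ (s', nj, ?N + 2) # (s, nj', ?N + 5) # ys))"
      using dist lt by auto
    show "\<forall>x\<in>dartof ` set (xs @ (s', nj, ?N + 2) # (s, nj', ?N + 5) # ys). x < ?N + 6"
      using lt by auto
    show "\<forall>x<?N + 6. ((copp c)(d := ?N, ?N := d, d' := ?N + 3, ?N + 3 := d', ?N + 1 := ?N + 4, ?N + 4 := ?N + 1)) x < ?N + 6 \<and>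
      ((cnxt c)(?N + 1 := ?N, ?N := ?N + 2, ?N + 2 := ?N + 1, ?N + 3 := ?N + 4, ?N + 4 := ?N + 5, ?N + 5 := ?N + 3)) x < ?N + 6"
      unfolding all_less_add all6 using cl lt fx by auto
    show "\<forall>x. x \<in> dartof ` set (xs @ (s', nj, ?N + 2) # (s, nj', ?N + 5) # ys) \<or> ?N + 6 \<le> x \<longrightarrow>
        ((copp c)(d := ?N, ?N := d, d' := ?N + 3, ?N + 3 := d', ?N + 1 := ?N + 4, ?N + 4 := ?N + 1)) x = x"
      using fx lt dist o by (auto simp: fun_upd_def)
    show "\<forall>e\<in>set (xs @ (s', nj, ?N + 2) # (s, nj', ?N + 5) # ys). fst (snd e) \<in> {-1,0,1}"
      using ss st nj by auto
  qed
qed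


lemma ginv_Y:
  assumes st: "strs c = xs @ (s,j,d) # (s',j',d') # ys" and g: "ginv c"
    and nj: "nj \<in> {-1,0,1}"
  shows "ginv (Yres xs s d d' ys nj c)"
proof -
  let ?N = "cnt c"
  from g st have dist: "distinct (map dartof xs @ d # d' # map dartof ys)"
    and lt: "\<forall>x\<in>dartof ` set xs. x < ?N" "\<forall>x\<in>dartof ` set ys. x < ?N" "d < ?N" "d' < ?N"
    and cl: "\<forall>x<?N. copp c x < ?N \<and> cnxt c x < ?N"
    and fx: "\<forall>x. (x \<in> opn c \<or> ?N \<le> x) \<longrightarrow> copp c x = x"
    and ss: "\<forall>e\<in>set (strs c). fst (snd e) \<in> {-1,0,1}"
    by (auto simp: ginv_def opn_def)
  have o: "opn c = dartof ` set xs \<union> {d, d'} \<union> dartof ` set ys" using st by (auto simp: opn_def)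
  show ?thesis
    unfolding ginv_def opn_def Yres_sel
  proof (intro conjI)
    show "distinct (map dartof (xs @ (\<not> s, nj, ?N + 2) # ys))"
      using dist lt by auto
    show "\<forall>x\<in>dartof ` set (xs @ (\<not> s, nj, ?N + 2) # ys). x < ?N + 3"
      using lt by auto
    show "\<forall>x<?N + 3. ((copp c)(d := ?N, ?N := d, d' := ?N + 1, ?N + 1 := d')) x < ?N + 3 \<and>
      ((cnxt c)(?N + 1 := ?N, ?N := ?N + 2, ?N + 2 := ?N + 1)) x < ?N + 3"
      unfolding all_less_add all3 using cl lt fx by auto
    show "\<forall>x. x \<in> dartof ` set (xs @ (\<not> s, nj, ?N + 2) # ys) \<or> ?N + 3 \<le> x \<longrightarrow>
        ((copp c)(d := ?N, ?N := d, d' := ?N + 1, ?N + 1 := d')) x = x"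
      using fx lt dist o by (auto simp: fun_upd_def)
    show "\<forall>e\<in>set (xs @ (\<not> s, nj, ?N + 2) # ys). fst (snd e) \<in> {-1,0,1}"
      using ss st nj by auto
  qed
qed

lemma ginv_C:
  assumes st: "strs c = xs @ (s,j,d) # (s',j',d') # ys" and g: "ginv c"
  shows "ginv (Cres xs d d' ys c)"
proof -
  let ?N = "cnt c"
  from g st have dist: "distinct (map dartof xs @ d # d' # map dartof ys)"
    and lt: "\<forall>x\<in>dartof ` set xs. x < ?N" "\<forall>x\<in>dartof ` set ys. x < ?N" "d < ?N" "d' < ?N"
    and cl: "\<forall>x<?N. copp c x < ?N \<and> cnxt c x < ?N"
    and fx: "\<forall>x. (x \<in> opn c \<or> ?N \<le> x) \<longrightarrow> copp c x = x"
    and ss: "\<forall>e\<in>set (strs c). fst (snd e) \<in> {-1,0,1}"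
    by (auto simp: ginv_def opn_def)
  have o: "opn c = dartof ` set xs \<union> {d, d'} \<union> dartof ` set ys" using st by (auto simp: opn_def)
  show ?thesis
    unfolding ginv_def opn_def Cres_sel
  proof (intro conjI)
    show "distinct (map dartof (xs @ ys))"
      using dist lt by auto
    show "\<forall>x\<in>dartof ` set (xs @ ys). x < ?N"
      using lt by auto
    show "\<forall>x<?N. ((copp c)(d := d', d' := d)) x < ?N \<and> cnxt c x < ?N"
      using cl lt by auto
    show "\<forall>x. x \<in> dartof ` set (xs @ ys) \<or> ?N \<le> x \<longrightarrow> ((copp c)(d := d', d' := d)) x = x"
      using fx lt dist o by (auto simp: fun_upd_def)
    show "\<forall>e\<in>set (xs @ ys). fst (snd e) \<in> {-1,0,1}"
      using ss st by auto
  qed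
qed

lemma ginv_step: "gstep c c' \<Longrightarrow> ginv c \<Longrightarrow> ginv c'"
  unfolding gstep_iff
  apply (elim exE conjE disjE)
  apply (auto simp: HS_def YS_def intro: ginv_H ginv_C ginv_Y)
  done

lemma ginv_steps: "gstep\<^sup>*\<^sup>* c c' \<Longrightarrow> ginv c \<Longrightarrow> ginv c'"
  by (induction rule: rtranclp_induct) (auto intro: ginv_step)

fun wsum :: "nat \<Rightarrow> (bool \<times> int \<times> nat) list \<Rightarrow> int" where
  "wsum k [] = 0"
| "wsum k (e # r) = int k * fst (snd e) + wsum (Suc k) r"

lemma wsum_append: "wsum k (xs @ ys) = wsum k xs + wsum (k + length xs) ys"
  by (induction xs arbitrary: k) auto

lemma wsum_bound: "\<forall>e\<in>set L. fst (snd e) \<le> 1 \<Longrightarrow> wsum k L \<le> int (length L * (k + length L))"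
proof (induction L arbitrary: k)
  case Nil then show ?case by simp
next
  case (Cons e r)
  have h1: "fst (snd e) \<le> 1" using Cons.prems by simp
  have a: "int k * fst (snd e) \<le> int k" using h1 by (simp add: mult_left_le)
  have pr: "\<forall>e\<in>set r. fst (snd e) \<le> 1" using Cons.prems by simp
  have b: "wsum (Suc k) r \<le> int (length r * (Suc k + length r))" by (rule Cons.IH[OF pr])
  have eq: "int (length (e#r) * (k + length (e#r))) = int k + int (length r * (Suc k + length r)) + int (length r) + 1"
    by (simp add: algebra_simps)
  show ?case using a b eq by simp
qed

definition mu1 :: "cfg \<Rightarrow> nat" where "mu1 c = length (strs c)"
definition mu2 :: "cfg \<Rightarrow> nat" where
  "mu2 c = nat (int (length (strs c) * length (strs c)) - wsum 0 (strs c))"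

definition R :: "(cfg \<times> cfg) set" where "R = {(c', c). ginv c \<and> gstep c c'}"

lemma R_sub: "R \<subseteq> measures [mu1, mu2]"
proof
  fix p assume "p \<in> R"
  then obtain c c' where p: "p = (c', c)" and g: "ginv c" and st: "gstep c c'" by (auto simp: R_def)
  have g': "ginv c'" using ginv_step st g by blast
  from st obtain xs s j d s' j' d' ys where sc: "strs c = xs @ (s,j,d) # (s',j',d') # ys" and
   r: "((s' \<noteq> s \<and> (\<exists>nj nj'. (j,j',nj,nj') \<in> HS \<and> c' = Hres xs s d s' d' ys nj nj' c)) \<or>
    (s' \<noteq> s \<and> j = 1 \<and> j' = -1 \<and> c' = Cres xs d d' ys c) \<or>
    (s' = s \<and> (\<exists>nj. (j,j',nj) \<in> YS \<and> c' = Yres xs s d d' ys nj c)))"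
    unfolding gstep_iff by blast
  from r show "p \<in> measures [mu1, mu2]"
  proof (elim disjE conjE exE)
    fix nj nj' assume h: "(j,j',nj,nj') \<in> HS" "c' = Hres xs s d s' d' ys nj nj' c"
    let ?L = "length (strs c)"
    have l: "length (strs c') = ?L" using h sc by simp
    have w: "wsum 0 (strs c') = wsum 0 (strs c) + 1"
      using h sc by (auto simp: wsum_append HS_def algebra_simps)
    have "\<forall>e\<in>set (strs c'). fst (snd e) \<le> 1" using g' by (auto simp: ginv_def)
    then have "wsum 0 (strs c') \<le> int (?L * ?L)" using wsum_bound[of "strs c'" 0] l by simp
    then show ?thesis using p l w by (simp add: mu1_def mu2_def)
  next
    assume "c' = Cres xs d d' ys c"
    then show ?thesis using p sc by (simp add: mu1_def)
  next
    fix nj assume "c' = Yres xs s d d' ys nj c"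
    then show ?thesis using p sc by (simp add: mu1_def)
  qed
qed

lemma wf_R: "wf R"
  using R_sub wf_measures wf_subset by blast

lemma nf_exists: "ginv c \<Longrightarrow> \<exists>d. gstep\<^sup>*\<^sup>* c d \<and> gfinal d"
proof (induction c rule: wf_induct[OF wf_R])
  case (1 c)
  show ?case
  proof (cases "gfinal c")
    case True then show ?thesis by blast
  next
    case False
    then obtain c' where st: "gstep c c'" by (auto simp: gfinal_def)
    then have "(c', c) \<in> R" using 1 by (simp add: R_def)
    moreover have "ginv c'" using ginv_step st 1 by blast
    ultimately obtain d where "gstep\<^sup>*\<^sup>* c' d" "gfinal d" using 1 by blast
    then show ?thesis using st by (meson converse_rtranclp_into_rtranclp)
  qed
qed

definition mapd :: "(nat \<Rightarrow> nat) \<Rightarrow> bool \<times> int \<times> nat \<Rightarrow> bool \<times> int \<times> nat" where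
  "mapd f e = (fst e, fst (snd e), f (snd (snd e)))"

lemma mapd_simp[simp]: "mapd f (s, j, d) = (s, j, f d)" by (simp add: mapd_def)

definition miso :: "(nat \<Rightarrow> nat) \<Rightarrow> cfg \<Rightarrow> cfg \<Rightarrow> bool" where
  "miso f c1 c2 \<longleftrightarrow> bij_betw f {..<cnt c1} {..<cnt c2} \<and>
     (\<forall>x<cnt c1. f (copp c1 x) = copp c2 (f x) \<and> f (cnxt c1 x) = cnxt c2 (f x)
        \<and> cout c2 (f x) = cout c1 x \<and> clab c2 (f x) = clab c1 x)"

definition ciso :: "cfg \<Rightarrow> cfg \<Rightarrow> bool" where
  "ciso c1 c2 \<longleftrightarrow> (\<exists>f. miso f c1 c2 \<and> strs c2 = map (mapd f) (strs c1))"

lemma mapd_id: "mapd id = id" by (auto simp: mapd_def fun_eq_iff)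

lemma ciso_refl: "ciso c c"
  unfolding ciso_def miso_def
  by (rule exI[of _ id]) (auto simp: mapd_id)

lemma ginv_lt: "ginv c \<Longrightarrow> e \<in> set (strs c) \<Longrightarrow> snd (snd e) < cnt c"
  by (auto simp: ginv_def opn_def dartof_def)

lemma ciso_sym: assumes g: "ginv c1" and i: "ciso c1 c2" shows "ciso c2 c1"
proof -
  obtain f where m: "miso f c1 c2" and s: "strs c2 = map (mapd f) (strs c1)" using i by (auto simp: ciso_def)
  let ?g = "the_inv_into {..<cnt c1} f"
  have b: "bij_betw f {..<cnt c1} {..<cnt c2}" using m by (simp add: miso_def)
  have bg: "bij_betw ?g {..<cnt c2} {..<cnt c1}" using b by (rule bij_betw_the_inv_into)
  have gf: "\<And>x. x < cnt c1 \<Longrightarrow> ?g (f x) = x" using b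
    by (simp add: bij_betw_def the_inv_into_f_f)
  have cl: "\<forall>x<cnt c1. copp c1 x < cnt c1 \<and> cnxt c1 x < cnt c1" using g by (simp add: ginv_def)
  have "miso ?g c2 c1"
    unfolding miso_def
  proof (intro conjI bg allI impI)
    fix y assume y: "y < cnt c2"
    then obtain x where x: "x < cnt c1" "y = f x" using b by (metis bij_betw_iff_bijections lessThan_iff)
    have mx: "f (copp c1 x) = copp c2 (f x) \<and> f (cnxt c1 x) = cnxt c2 (f x)
        \<and> cout c2 (f x) = cout c1 x \<and> clab c2 (f x) = clab c1 x" using m x by (simp add: miso_def)
    show "?g (copp c2 y) = copp c1 (?g y)" using mx x gf cl by metis
    show "?g (cnxt c2 y) = cnxt c1 (?g y)" using mx x gf cl by metis
    show "cout c1 (?g y) = cout c2 y" using mx x gf by metis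
    show "clab c1 (?g y) = clab c2 y" using mx x gf by metis
  qed
  moreover have "strs c1 = map (mapd ?g) (strs c2)"
  proof -
    have "map (mapd ?g) (strs c2) = map (mapd ?g \<circ> mapd f) (strs c1)" using s by simp
    also have "\<dots> = strs c1"
    proof (rule map_idI)
      fix e assume "e \<in> set (strs c1)"
      then have "snd (snd e) < cnt c1" using ginv_lt g by blast
      then show "(mapd ?g \<circ> mapd f) e = e" using gf by (simp add: mapd_def)
    qed
    finally show ?thesis by simp
  qed
  ultimately show ?thesis by (auto simp: ciso_def)
qed

lemma ciso_trans: assumes "ciso c1 c2" "ciso c2 c3" shows "ciso c1 c3"
proof -
  obtain f where m: "miso f c1 c2" and s: "strs c2 = map (mapd f) (strs c1)" using assms(1) by (auto simp: ciso_def)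
  obtain g where m2: "miso g c2 c3" and s2: "strs c3 = map (mapd g) (strs c2)" using assms(2) by (auto simp: ciso_def)
  have b: "bij_betw f {..<cnt c1} {..<cnt c2}" using m by (simp add: miso_def)
  have b2: "bij_betw g {..<cnt c2} {..<cnt c3}" using m2 by (simp add: miso_def)
  have "miso (g \<circ> f) c1 c3"
    unfolding miso_def
  proof (intro conjI allI impI)
    show "bij_betw (g \<circ> f) {..<cnt c1} {..<cnt c3}" using b b2 by (rule bij_betw_trans)
    fix x assume x: "x < cnt c1"
    have fx: "f x < cnt c2" using b x by (auto simp: bij_betw_def)
    show "(g \<circ> f) (copp c1 x) = copp c3 ((g \<circ> f) x)" using m m2 x fx by (simp add: miso_def)
    show "(g \<circ> f) (cnxt c1 x) = cnxt c3 ((g \<circ> f) x)" using m m2 x fx by (simp add: miso_def)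
    show "cout c3 ((g \<circ> f) x) = cout c1 x" using m m2 x fx by (simp add: miso_def)
    show "clab c3 ((g \<circ> f) x) = clab c1 x" using m m2 x fx by (simp add: miso_def)
  qed
  moreover have "strs c3 = map (mapd (g \<circ> f)) (strs c1)" using s s2 by (simp add: mapd_def)
  ultimately show ?thesis by (auto simp: ciso_def)
qed

lemma bij_ext:
  fixes f :: "nat \<Rightarrow> nat" and N1 N2 K :: nat
  assumes "bij_betw f {..<N1} {..<N2}"
  shows "bij_betw (\<lambda>x. if x < N1 then f x else x - N1 + N2) {..<N1 + K} {..<N2 + K}"
proof -
  let ?h = "\<lambda>x. if x < N1 then f x else x - N1 + N2"
  have "inj_on ?h {..<N1 + K}"
  proof (rule inj_onI)
    fix x y assume x: "x \<in> {..<N1 + K}" and y: "y \<in> {..<N1 + K}" and e: "?h x = ?h y"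
    have fr: "\<And>z. z < N1 \<Longrightarrow> f z < N2" using assms by (auto simp: bij_betw_def)
    have inj: "inj_on f {..<N1}" using assms by (auto simp: bij_betw_def)
    show "x = y"
    proof (cases "x < N1"; cases "y < N1")
      assume "x < N1" "y < N1" then show ?thesis using e inj by (auto simp: inj_on_def)
    next
      assume a: "x < N1" "\<not> y < N1"
      then have e': "f x = y - N1 + N2" using e by simp
      have "f x < N2" using fr a by simp
      then show ?thesis using e' by simp
    next
      assume a: "\<not> x < N1" "y < N1"
      then have e': "f y = x - N1 + N2" using e by simp
      have "f y < N2" using fr a by simp
      then show ?thesis using e' by simp
    next
      assume "\<not> x < N1" "\<not> y < N1" then show ?thesis using e by auto
    qed
  qed
  moreover have "?h ` {..<N1 + K} = {..<N2 + K}"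
  proof
    have fr: "\<And>z. z < N1 \<Longrightarrow> f z < N2" using assms by (auto simp: bij_betw_def)
    show "?h ` {..<N1 + K} \<subseteq> {..<N2 + K}" using fr by fastforce
    show "{..<N2 + K} \<subseteq> ?h ` {..<N1 + K}"
    proof
      fix y assume y: "y \<in> {..<N2 + K}"
      show "y \<in> ?h ` {..<N1 + K}"
      proof (cases "y < N2")
        case True
        then obtain x where "x < N1" "f x = y" using assms by (metis bij_betw_iff_bijections lessThan_iff)
        then show ?thesis by (auto intro!: image_eqI[of _ _ x])
      next
        case False
        then show ?thesis using y by (auto intro!: image_eqI[of _ _ "y - N2 + N1"])
      qed
    qed
  qed
  ultimately show ?thesis by (simp add: bij_betw_def)
qed

lemma ginv_facts:
  assumes g: "ginv c" and st: "strs c = xs @ (s,j,d) # (s',j',d') # ys"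
  shows "d < cnt c" "d' < cnt c" "d \<noteq> d'"
    "\<forall>x<cnt c. copp c x < cnt c \<and> cnxt c x < cnt c"
    "\<And>x. cnt c \<le> x \<Longrightarrow> copp c x = x"
  using g st by (auto simp: ginv_def opn_def)

lemma miso_facts:
  assumes m: "miso f c1 c2"
  shows "\<And>x. x < cnt c1 \<Longrightarrow> f x < cnt c2"
    "\<And>x y. x < cnt c1 \<Longrightarrow> y < cnt c1 \<Longrightarrow> (f x = f y) = (x = y)"
    "\<And>x. x < cnt c1 \<Longrightarrow> f (copp c1 x) = copp c2 (f x)"
    "\<And>x. x < cnt c1 \<Longrightarrow> f (cnxt c1 x) = cnxt c2 (f x)"
    "\<And>x. x < cnt c1 \<Longrightarrow> cout c2 (f x) = cout c1 x"
    "\<And>x. x < cnt c1 \<Longrightarrow> clab c2 (f x) = clab c1 x"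
  using m unfolding miso_def bij_betw_def inj_on_def by auto

lemma map_mapd_ext:
  "\<forall>e\<in>set L. snd (snd e) < N \<Longrightarrow> map (mapd (\<lambda>x. if x < N then f x else g x)) L = map (mapd f) L"
  by (auto simp: mapd_def)

lemma sim_H:
  assumes g1: "ginv c1" and g2: "ginv c2" and m: "miso f c1 c2"
    and s: "strs c2 = map (mapd f) (strs c1)" and st: "strs c1 = xs @ (s,j,d) # (s',j',d') # ys"
  shows "ciso (Hres xs s d s' d' ys nj nj' c1) (Hres (map (mapd f) xs) s (f d) s' (f d') (map (mapd f) ys) nj nj' c2)"
proof -
  let ?N1 = "cnt c1" and ?N2 = "cnt c2"
  define f' where "f' = (\<lambda>x. if x < ?N1 then f x else x - ?N1 + ?N2)"
  have st2: "strs c2 = map (mapd f) xs @ (s,j,f d) # (s',j',f d') # map (mapd f) ys" using s st by simp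
  note F1 = ginv_facts[OF g1 st] and F2 = ginv_facts[OF g2 st2] and M = miso_facts[OF m]
  have b: "bij_betw f {..<?N1} {..<?N2}" using m by (simp add: miso_def)
  have "miso f' (Hres xs s d s' d' ys nj nj' c1) (Hres (map (mapd f) xs) s (f d) s' (f d') (map (mapd f) ys) nj nj' c2)"
    unfolding miso_def Hres_sel
  proof (intro conjI)
    show "bij_betw f' {..<?N1 + 6} {..<?N2 + 6}" unfolding f'_def by (rule bij_ext[OF b])
    show "\<forall>x<?N1 + 6. f' (((copp c1)(d := ?N1, ?N1 := d, d' := ?N1 + 3, ?N1 + 3 := d', ?N1 + 1 := ?N1 + 4, ?N1 + 4 := ?N1 + 1)) x) =
         ((copp c2)(f d := ?N2, ?N2 := f d, f d' := ?N2 + 3, ?N2 + 3 := f d', ?N2 + 1 := ?N2 + 4, ?N2 + 4 := ?N2 + 1)) (f' x) \<and>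
        f' (((cnxt c1)(?N1 + 1 := ?N1, ?N1 := ?N1 + 2, ?N1 + 2 := ?N1 + 1, ?N1 + 3 := ?N1 + 4, ?N1 + 4 := ?N1 + 5, ?N1 + 5 := ?N1 + 3)) x) =
         ((cnxt c2)(?N2 + 1 := ?N2, ?N2 := ?N2 + 2, ?N2 + 2 := ?N2 + 1, ?N2 + 3 := ?N2 + 4, ?N2 + 4 := ?N2 + 5, ?N2 + 5 := ?N2 + 3)) (f' x) \<and>
        ((cout c2)(?N2 := s, ?N2 + 1 := s, ?N2 + 2 := s, ?N2 + 3 := s', ?N2 + 4 := s', ?N2 + 5 := s')) (f' x) =
         ((cout c1)(?N1 := s, ?N1 + 1 := s, ?N1 + 2 := s, ?N1 + 3 := s', ?N1 + 4 := s', ?N1 + 5 := s')) x \<and>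
        ((clab c2)(?N2 := None, ?N2 + 1 := None, ?N2 + 2 := None, ?N2 + 3 := None, ?N2 + 4 := None, ?N2 + 5 := None)) (f' x) =
         ((clab c1)(?N1 := None, ?N1 + 1 := None, ?N1 + 2 := None, ?N1 + 3 := None, ?N1 + 4 := None, ?N1 + 5 := None)) x"
      unfolding all_less_add all6
    proof (intro conjI allI impI)
      fix x assume x: "x < ?N1"
      have fx: "f x < ?N2" using M(1) x by blast
      have c1: "copp c1 x < ?N1" "cnxt c1 x < ?N1" using F1(4) x by auto
      have e1: "(f x = f d) = (x = d)" "(f x = f d') = (x = d')" using M(2) x F1(1,2) by auto
      show "f' (((copp c1)(d := ?N1, ?N1 := d, d' := ?N1 + 3, ?N1 + 3 := d', ?N1 + 1 := ?N1 + 4, ?N1 + 4 := ?N1 + 1)) x) =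
         ((copp c2)(f d := ?N2, ?N2 := f d, f d' := ?N2 + 3, ?N2 + 3 := f d', ?N2 + 1 := ?N2 + 4, ?N2 + 4 := ?N2 + 1)) (f' x)"
        using x fx c1 e1 M(3)[OF x] F1(1,2) by (auto simp: f'_def)
      show "f' (((cnxt c1)(?N1 + 1 := ?N1, ?N1 := ?N1 + 2, ?N1 + 2 := ?N1 + 1, ?N1 + 3 := ?N1 + 4, ?N1 + 4 := ?N1 + 5, ?N1 + 5 := ?N1 + 3)) x) =
         ((cnxt c2)(?N2 + 1 := ?N2, ?N2 := ?N2 + 2, ?N2 + 2 := ?N2 + 1, ?N2 + 3 := ?N2 + 4, ?N2 + 4 := ?N2 + 5, ?N2 + 5 := ?N2 + 3)) (f' x)"
        using x fx c1 M(4)[OF x] by (auto simp: f'_def)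
      show "((cout c2)(?N2 := s, ?N2 + 1 := s, ?N2 + 2 := s, ?N2 + 3 := s', ?N2 + 4 := s', ?N2 + 5 := s')) (f' x) =
         ((cout c1)(?N1 := s, ?N1 + 1 := s, ?N1 + 2 := s, ?N1 + 3 := s', ?N1 + 4 := s', ?N1 + 5 := s')) x"
        using x fx M(5)[OF x] by (auto simp: f'_def)
      show "((clab c2)(?N2 := None, ?N2 + 1 := None, ?N2 + 2 := None, ?N2 + 3 := None, ?N2 + 4 := None, ?N2 + 5 := None)) (f' x) =
         ((clab c1)(?N1 := None, ?N1 + 1 := None, ?N1 + 2 := None, ?N1 + 3 := None, ?N1 + 4 := None, ?N1 + 5 := None)) x"
        using x fx M(6)[OF x] by (auto simp: f'_def)
    qed (use F1 F2 M(1)[of d] M(1)[of d'] M(2)[of d d'] in \<open>auto simp: f'_def\<close>)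
  qed
  moreover have "strs (Hres (map (mapd f) xs) s (f d) s' (f d') (map (mapd f) ys) nj nj' c2) =
     map (mapd f') (strs (Hres xs s d s' d' ys nj nj' c1))"
  proof -
    have "\<forall>e\<in>set xs. snd (snd e) < ?N1" "\<forall>e\<in>set ys. snd (snd e) < ?N1"
      using g1 st by (auto simp: ginv_def opn_def dartof_def)
    then show ?thesis by (auto simp: f'_def mapd_def)
  qed
  ultimately show ?thesis unfolding ciso_def by blast
qed


lemma sim_Y:
  assumes g1: "ginv c1" and g2: "ginv c2" and m: "miso f c1 c2"
    and s: "strs c2 = map (mapd f) (strs c1)" and st: "strs c1 = xs @ (s,j,d) # (s',j',d') # ys"
  shows "ciso (Yres xs s d d' ys nj c1) (Yres (map (mapd f) xs) s (f d) (f d') (map (mapd f) ys) nj c2)"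
proof -
  let ?N1 = "cnt c1" and ?N2 = "cnt c2"
  define f' where "f' = (\<lambda>x. if x < ?N1 then f x else x - ?N1 + ?N2)"
  have st2: "strs c2 = map (mapd f) xs @ (s,j,f d) # (s',j',f d') # map (mapd f) ys" using s st by simp
  note F1 = ginv_facts[OF g1 st] and F2 = ginv_facts[OF g2 st2] and M = miso_facts[OF m]
  have b: "bij_betw f {..<?N1} {..<?N2}" using m by (simp add: miso_def)
  have "miso f' (Yres xs s d d' ys nj c1) (Yres (map (mapd f) xs) s (f d) (f d') (map (mapd f) ys) nj c2)"
    unfolding miso_def Yres_sel
  proof (intro conjI)
    show "bij_betw f' {..<?N1 + 3} {..<?N2 + 3}" unfolding f'_def by (rule bij_ext[OF b])
    show "\<forall>x<?N1 + 3. f' (((copp c1)(d := ?N1, ?N1 := d, d' := ?N1 + 1, ?N1 + 1 := d')) x) =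
         ((copp c2)(f d := ?N2, ?N2 := f d, f d' := ?N2 + 1, ?N2 + 1 := f d')) (f' x) \<and>
        f' (((cnxt c1)(?N1 + 1 := ?N1, ?N1 := ?N1 + 2, ?N1 + 2 := ?N1 + 1)) x) =
         ((cnxt c2)(?N2 + 1 := ?N2, ?N2 := ?N2 + 2, ?N2 + 2 := ?N2 + 1)) (f' x) \<and>
        ((cout c2)(?N2 := s, ?N2 + 1 := s, ?N2 + 2 := s)) (f' x) =
         ((cout c1)(?N1 := s, ?N1 + 1 := s, ?N1 + 2 := s)) x \<and>
        ((clab c2)(?N2 := None, ?N2 + 1 := None, ?N2 + 2 := None)) (f' x) =
         ((clab c1)(?N1 := None, ?N1 + 1 := None, ?N1 + 2 := None)) x"
      unfolding all_less_add all3
    proof (intro conjI allI impI)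
      fix x assume x: "x < ?N1"
      have fx: "f x < ?N2" using M(1) x by blast
      have c1: "copp c1 x < ?N1" "cnxt c1 x < ?N1" using F1(4) x by auto
      have e1: "(f x = f d) = (x = d)" "(f x = f d') = (x = d')" using M(2) x F1(1,2) by auto
      show "f' (((copp c1)(d := ?N1, ?N1 := d, d' := ?N1 + 1, ?N1 + 1 := d')) x) =
         ((copp c2)(f d := ?N2, ?N2 := f d, f d' := ?N2 + 1, ?N2 + 1 := f d')) (f' x)"
        using x fx c1 e1 M(3)[OF x] F1(1,2) by (auto simp: f'_def)
      show "f' (((cnxt c1)(?N1 + 1 := ?N1, ?N1 := ?N1 + 2, ?N1 + 2 := ?N1 + 1)) x) =
         ((cnxt c2)(?N2 + 1 := ?N2, ?N2 := ?N2 + 2, ?N2 + 2 := ?N2 + 1)) (f' x)"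
        using x fx c1 M(4)[OF x] by (auto simp: f'_def)
      show "((cout c2)(?N2 := s, ?N2 + 1 := s, ?N2 + 2 := s)) (f' x) =
         ((cout c1)(?N1 := s, ?N1 + 1 := s, ?N1 + 2 := s)) x"
        using x fx M(5)[OF x] by (auto simp: f'_def)
      show "((clab c2)(?N2 := None, ?N2 + 1 := None, ?N2 + 2 := None)) (f' x) =
         ((clab c1)(?N1 := None, ?N1 + 1 := None, ?N1 + 2 := None)) x"
        using x fx M(6)[OF x] by (auto simp: f'_def)
    qed (use F1 F2 M(1)[of d] M(1)[of d'] M(2)[of d d'] in \<open>auto simp: f'_def\<close>)
  qed
  moreover have "strs (Yres (map (mapd f) xs) s (f d) (f d') (map (mapd f) ys) nj c2) =
     map (mapd f') (strs (Yres xs s d d' ys nj c1))"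
  proof -
    have "\<forall>e\<in>set xs. snd (snd e) < ?N1" "\<forall>e\<in>set ys. snd (snd e) < ?N1"
      using g1 st by (auto simp: ginv_def opn_def dartof_def)
    then show ?thesis by (auto simp: f'_def mapd_def)
  qed
  ultimately show ?thesis unfolding ciso_def by blast
qed

lemma sim_C:
  assumes g1: "ginv c1" and g2: "ginv c2" and m: "miso f c1 c2"
    and s: "strs c2 = map (mapd f) (strs c1)" and st: "strs c1 = xs @ (s,j,d) # (s',j',d') # ys"
  shows "ciso (Cres xs d d' ys c1) (Cres (map (mapd f) xs) (f d) (f d') (map (mapd f) ys) c2)"
proof -
  let ?N1 = "cnt c1" and ?N2 = "cnt c2"
  have st2: "strs c2 = map (mapd f) xs @ (s,j,f d) # (s',j',f d') # map (mapd f) ys" using s st by simp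
  note F1 = ginv_facts[OF g1 st] and F2 = ginv_facts[OF g2 st2] and M = miso_facts[OF m]
  have b: "bij_betw f {..<?N1} {..<?N2}" using m by (simp add: miso_def)
  have "miso f (Cres xs d d' ys c1) (Cres (map (mapd f) xs) (f d) (f d') (map (mapd f) ys) c2)"
    unfolding miso_def Cres_sel
  proof (intro conjI b allI impI)
    fix x assume x: "x < ?N1"
    have fx: "f x < ?N2" using M(1) x by blast
    have c1: "copp c1 x < ?N1" "cnxt c1 x < ?N1" using F1(4) x by auto
    have e1: "(f x = f d) = (x = d)" "(f x = f d') = (x = d')" using M(2) x F1(1,2) by auto
    show "f (((copp c1)(d := d', d' := d)) x) = ((copp c2)(f d := f d', f d' := f d)) (f x)"
      using x fx c1 e1 M(3)[OF x] F1(1,2) by auto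
    show "f (cnxt c1 x) = cnxt c2 (f x)" using M(4)[OF x] .
    show "cout c2 (f x) = cout c1 x" using M(5)[OF x] .
    show "clab c2 (f x) = clab c1 x" using M(6)[OF x] .
  qed
  moreover have "strs (Cres (map (mapd f) xs) (f d) (f d') (map (mapd f) ys) c2) =
     map (mapd f) (strs (Cres xs d d' ys c1))" by simp
  ultimately show ?thesis unfolding ciso_def by blast
qed

lemma ciso_step:
  assumes g1: "ginv c1" and g2: "ginv c2" and i: "ciso c1 c2" and st: "gstep c1 c1'"
  shows "\<exists>c2'. gstep c2 c2' \<and> ciso c1' c2'"
proof -
  obtain f where m: "miso f c1 c2" and s: "strs c2 = map (mapd f) (strs c1)" using i by (auto simp: ciso_def)
  from st obtain xs s j d s' j' d' ys where sc: "strs c1 = xs @ (s,j,d) # (s',j',d') # ys" and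
   r: "((s' \<noteq> s \<and> (\<exists>nj nj'. (j,j',nj,nj') \<in> HS \<and> c1' = Hres xs s d s' d' ys nj nj' c1)) \<or>
    (s' \<noteq> s \<and> j = 1 \<and> j' = -1 \<and> c1' = Cres xs d d' ys c1) \<or>
    (s' = s \<and> (\<exists>nj. (j,j',nj) \<in> YS \<and> c1' = Yres xs s d d' ys nj c1)))"
    unfolding gstep_iff by blast
  have sc2: "strs c2 = map (mapd f) xs @ (s,j,f d) # (s',j',f d') # map (mapd f) ys" using s sc by simp
  from r show ?thesis
  proof (elim disjE conjE exE)
    fix nj nj' assume h: "s' \<noteq> s" "(j,j',nj,nj') \<in> HS" "c1' = Hres xs s d s' d' ys nj nj' c1"
    have "gstep c2 (Hres (map (mapd f) xs) s (f d) s' (f d') (map (mapd f) ys) nj nj' c2)"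
      unfolding gstep_iff using sc2 h by blast
    then show ?thesis using sim_H[OF g1 g2 m s sc] h by blast
  next
    assume h: "s' \<noteq> s" "j = 1" "j' = -1" "c1' = Cres xs d d' ys c1"
    have "gstep c2 (Cres (map (mapd f) xs) (f d) (f d') (map (mapd f) ys) c2)"
      unfolding gstep_iff using sc2 h by blast
    then show ?thesis using sim_C[OF g1 g2 m s sc] h by blast
  next
    fix nj assume h: "s' = s" "(j,j',nj) \<in> YS" "c1' = Yres xs s d d' ys nj c1"
    have "gstep c2 (Yres (map (mapd f) xs) s (f d) (f d') (map (mapd f) ys) nj c2)"
      unfolding gstep_iff using sc2 h by blast
    then show ?thesis using sim_Y[OF g1 g2 m s sc] h by blast
  qed
qed

lemma ciso_steps:
  assumes "gstep\<^sup>*\<^sup>* c1 d1" and "ginv c1" and "ginv c2" and "ciso c1 c2"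
  shows "\<exists>d2. gstep\<^sup>*\<^sup>* c2 d2 \<and> ciso d1 d2"
  using assms
proof (induction arbitrary: c2 rule: converse_rtranclp_induct)
  case base then show ?case by blast
next
  case (step y z)
  obtain y2 where "gstep c2 y2" "ciso z y2" using ciso_step step by blast
  moreover have "ginv z" using ginv_step step by blast
  moreover have "ginv y2" using ginv_step step \<open>gstep c2 y2\<close> by blast
  ultimately obtain d2 where "gstep\<^sup>*\<^sup>* y2 d2" "ciso d1 d2" using step.IH by blast
  then show ?case using \<open>gstep c2 y2\<close> by (meson converse_rtranclp_into_rtranclp)
qed

lemma ciso_final:
  assumes "ginv c1" "ginv c2" "ciso c1 c2" "gfinal c1" shows "gfinal c2"
proof (rule ccontr)
  assume "\<not> gfinal c2"
  then obtain c2' where "gstep c2 c2'" by (auto simp: gfinal_def)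
  then obtain c1' where "gstep c1 c1'" using ciso_step[OF assms(2,1) ciso_sym[OF assms(1,3)]] by blast
  then show False using assms(4) by (auto simp: gfinal_def)
qed

definition cwf :: "nat \<Rightarrow> nat \<times> (bool \<times> int \<times> nat) \<Rightarrow> web \<Rightarrow> web" where
  "cwf N = (\<lambda>(i, (s, j, d)) W.
              W\<lparr> wopp := (wopp W)(d := N + i, N + i := d),
                  wnxt := (wnxt W)(N + i := N + i),
                  wout := (wout W)(N + i := s),
                  wlab := (wlab W)(N + i := Some (BotPt i)) \<rparr>)"

definition wbase :: "cfg \<Rightarrow> web" where
  "wbase c = \<lparr> darts = {..<cnt c + length (strs c)}, wopp = copp c, wnxt = cnxt c,
             wout = cout c, wlab = clab c \<rparr>"

lemma close_web_eq: "close_web c = foldr (cwf (cnt c)) (zip [0..<length (strs c)] (strs c)) (wbase c)"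
  by (simp add: close_web_def Let_def cwf_def wbase_def)

lemma cwf_sel[simp]:
  "darts (cwf N (i, (s, j, d)) W) = darts W"
  "wopp (cwf N (i, (s, j, d)) W) = (wopp W)(d := N + i, N + i := d)"
  "wnxt (cwf N (i, (s, j, d)) W) = (wnxt W)(N + i := N + i)"
  "wout (cwf N (i, (s, j, d)) W) = (wout W)(N + i := s)"
  "wlab (cwf N (i, (s, j, d)) W) = (wlab W)(N + i := Some (BotPt i))"
  by (simp_all add: cwf_def)

lemma foldr_darts: "darts (foldr (cwf N) P W) = darts W"
  by (induction P) (auto simp: cwf_def split: prod.splits)

lemma foldr_in:
  assumes "distinct (map fst P)" "distinct (map (dartof \<circ> snd) P)" "\<forall>p\<in>set P. dartof (snd p) < N"
    and "(i, (s, j, d)) \<in> set P"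
  shows "wopp (foldr (cwf N) P W) (N + i) = d \<and> wopp (foldr (cwf N) P W) d = N + i \<and>
         wnxt (foldr (cwf N) P W) (N + i) = N + i \<and> wout (foldr (cwf N) P W) (N + i) = s \<and>
         wlab (foldr (cwf N) P W) (N + i) = Some (BotPt i)"
  using assms
proof (induction P)
  case Nil then show ?case by simp
next
  case (Cons p P)
  obtain i' s' j' d' where p: "p = (i', (s', j', d'))" by (cases p) auto
  show ?case
  proof (cases "p = (i, (s, j, d))")
    case True
    then show ?thesis using Cons.prems by (auto simp: p)
  next
    case False
    then have inP: "(i, (s, j, d)) \<in> set P" using Cons.prems by auto
    have IH: "wopp (foldr (cwf N) P W) (N + i) = d \<and> wopp (foldr (cwf N) P W) d = N + i \<and>
         wnxt (foldr (cwf N) P W) (N + i) = N + i \<and> wout (foldr (cwf N) P W) (N + i) = s \<and>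
         wlab (foldr (cwf N) P W) (N + i) = Some (BotPt i)" using Cons inP by auto
    have ne: "i' \<noteq> i" "d' \<noteq> d" using Cons.prems inP p by (auto simp: rev_image_eqI)
    have lt: "d < N" "d' < N" using Cons.prems inP p by auto
    show ?thesis using IH ne lt by (simp add: p)
  qed
qed

lemma foldr_out:
  assumes "\<forall>p\<in>set P. x \<noteq> N + fst p"
  shows "wnxt (foldr (cwf N) P W) x = wnxt W x \<and> wout (foldr (cwf N) P W) x = wout W x \<and>
         wlab (foldr (cwf N) P W) x = wlab W x"
  using assms
  by (induction P) (auto simp: cwf_def split: prod.splits)

lemma foldr_out_opp:
  assumes "\<forall>p\<in>set P. x \<noteq> N + fst p \<and> x \<noteq> dartof (snd p)"
  shows "wopp (foldr (cwf N) P W) x = wopp W x"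
  using assms
  by (induction P) (auto simp: cwf_def dartof_def split: prod.splits)


lemma zip_facts:
  assumes g: "ginv c"
  shows "distinct (map fst (zip [0..<length (strs c)] (strs c)))"
    "distinct (map (dartof \<circ> snd) (zip [0..<length (strs c)] (strs c)))"
    "\<forall>p\<in>set (zip [0..<length (strs c)] (strs c)). dartof (snd p) < cnt c"
proof -
  show "distinct (map fst (zip [0..<length (strs c)] (strs c)))" by simp
  have "map (dartof \<circ> snd) (zip [0..<length (strs c)] (strs c)) = map dartof (strs c)"
    by (metis length_upt list.map_comp map_snd_zip minus_nat.diff_0)
  then show "distinct (map (dartof \<circ> snd) (zip [0..<length (strs c)] (strs c)))" using g by (simp add: ginv_def)
  show "\<forall>p\<in>set (zip [0..<length (strs c)] (strs c)). dartof (snd p) < cnt c"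
    using g by (auto simp: ginv_def opn_def dest!: set_zip_rightD)
qed

lemma CW_bot:
  assumes g: "ginv c" and i: "i < length (strs c)" and e: "strs c ! i = (s, j, d)"
  shows "wopp (close_web c) (cnt c + i) = d \<and> wopp (close_web c) d = cnt c + i \<and>
         wnxt (close_web c) (cnt c + i) = cnt c + i \<and> wout (close_web c) (cnt c + i) = s \<and>
         wlab (close_web c) (cnt c + i) = Some (BotPt i)"
proof -
  have "(i, (s, j, d)) \<in> set (zip [0..<length (strs c)] (strs c))"
    using i e by (auto simp: in_set_zip intro!: exI[of _ i])
  then show ?thesis unfolding close_web_eq using foldr_in zip_facts[OF g] by blast
qed

lemma CW_in:
  assumes x: "x < cnt c"
  shows "wnxt (close_web c) x = cnxt c x \<and> wout (close_web c) x = cout c x \<and> wlab (close_web c) x = clab c x"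
proof -
  have "\<forall>p\<in>set (zip [0..<length (strs c)] (strs c)). x \<noteq> cnt c + fst p" using x by auto
  then show ?thesis unfolding close_web_eq using foldr_out by (simp add: wbase_def)
qed

lemma CW_in_opp:
  assumes x: "x < cnt c" and o: "x \<notin> opn c"
  shows "wopp (close_web c) x = copp c x"
proof -
  have "\<forall>p\<in>set (zip [0..<length (strs c)] (strs c)). x \<noteq> cnt c + fst p \<and> x \<noteq> dartof (snd p)"
    using x o by (auto simp: opn_def dest!: set_zip_rightD)
  then show ?thesis unfolding close_web_eq using foldr_out_opp by (simp add: wbase_def)
qed

lemma CW_darts: "darts (close_web c) = {..<cnt c + length (strs c)}"
  unfolding close_web_eq foldr_darts by (simp add: wbase_def)

lemma close_iso:
  assumes g1: "ginv c1" and g2: "ginv c2" and i: "ciso c1 c2"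
  shows "web_iso (close_web c1) (close_web c2)"
proof -
  obtain f where m: "miso f c1 c2" and s: "strs c2 = map (mapd f) (strs c1)" using i by (auto simp: ciso_def)
  let ?N1 = "cnt c1" and ?N2 = "cnt c2" and ?m = "length (strs c1)"
  have len: "length (strs c2) = ?m" using s by simp
  define F where "F = (\<lambda>x. if x < ?N1 then f x else x - ?N1 + ?N2)"
  note M = miso_facts[OF m]
  have b: "bij_betw f {..<?N1} {..<?N2}" using m by (simp add: miso_def)
  have bF: "bij_betw F (darts (close_web c1)) (darts (close_web c2))"
    unfolding CW_darts len F_def by (rule bij_ext[OF b])
  have nth2: "\<And>i. i < ?m \<Longrightarrow> strs c2 ! i = mapd f (strs c1 ! i)" using s by simp
  have opn1: "\<forall>x\<in>opn c1. x < ?N1" using g1 by (simp add: ginv_def)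
  have opn2: "opn c2 = f ` opn c1" using s by (auto simp: opn_def dartof_def mapd_def image_image)
  have cl1: "\<forall>x<?N1. copp c1 x < ?N1 \<and> cnxt c1 x < ?N1" using g1 by (simp add: ginv_def)
  have "\<forall>x\<in>darts (close_web c1). F (wopp (close_web c1) x) = wopp (close_web c2) (F x) \<and>
        F (wnxt (close_web c1) x) = wnxt (close_web c2) (F x) \<and>
        wout (close_web c2) (F x) = wout (close_web c1) x \<and> wlab (close_web c2) (F x) = wlab (close_web c1) x"
  proof
    fix x assume "x \<in> darts (close_web c1)"
    then have xl: "x < ?N1 + ?m" by (simp add: CW_darts)
    show "F (wopp (close_web c1) x) = wopp (close_web c2) (F x) \<and>
        F (wnxt (close_web c1) x) = wnxt (close_web c2) (F x) \<and>
        wout (close_web c2) (F x) = wout (close_web c1) x \<and> wlab (close_web c2) (F x) = wlab (close_web c1) x"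
    proof (cases "x < ?N1")
      case False
      define i where "i = x - ?N1"
      have xi: "x = ?N1 + i" and im: "i < ?m" using False xl by (auto simp: i_def)
      obtain s j d where e: "strs c1 ! i = (s, j, d)" by (cases "strs c1 ! i") auto
      have e2: "strs c2 ! i = (s, j, f d)" using nth2[OF im] e by simp
      have dl: "d < ?N1" using g1 im e by (metis ginv_lt nth_mem snd_conv)
      note B1 = CW_bot[OF g1 im e] and B2 = CW_bot[OF g2 im[folded len] e2]
      have Fx: "F x = ?N2 + i" using xi by (simp add: F_def)
      have Fd: "F d = f d" using dl by (simp add: F_def)
      have Fi: "F (?N1 + i) = ?N2 + i" by (simp add: F_def)
      show ?thesis unfolding Fx using B1 B2 Fd Fi xi by simp
    next
      case True
      have fx: "f x < ?N2" using M(1) True by blast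
      have W1: "wnxt (close_web c1) x = cnxt c1 x \<and> wout (close_web c1) x = cout c1 x \<and> wlab (close_web c1) x = clab c1 x"
        using CW_in True by blast
      have W2: "wnxt (close_web c2) (f x) = cnxt c2 (f x) \<and> wout (close_web c2) (f x) = cout c2 (f x) \<and> wlab (close_web c2) (f x) = clab c2 (f x)"
        using CW_in fx by blast
      have Fx: "F x = f x" using True by (simp add: F_def)
      have rest: "F (wnxt (close_web c1) x) = wnxt (close_web c2) (F x) \<and>
        wout (close_web c2) (F x) = wout (close_web c1) x \<and> wlab (close_web c2) (F x) = wlab (close_web c1) x"
        using W1 W2 Fx M(4,5,6)[OF True] cl1 True by (simp add: F_def)
      have "F (wopp (close_web c1) x) = wopp (close_web c2) (F x)"
      proof (cases "x \<in> opn c1")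
        case True
        then obtain e where ee: "e \<in> set (strs c1)" "x = dartof e" by (auto simp: opn_def)
        then obtain i where im: "i < ?m" "strs c1 ! i = e" by (metis in_set_conv_nth)
        obtain s j where e: "strs c1 ! i = (s, j, x)" using ee(2) im(2) by (cases e) (simp add: dartof_def)
        have e2: "strs c2 ! i = (s, j, f x)" using nth2[OF im(1)] e by simp
        note B1 = CW_bot[OF g1 im(1) e] and B2 = CW_bot[OF g2 im(1)[folded len] e2]
        show ?thesis using B1 B2 Fx by (simp add: F_def)
      next
        case False
        have nf: "f x \<notin> opn c2"
        proof
          assume "f x \<in> opn c2"
          then obtain y where y: "y \<in> opn c1" "f x = f y" using opn2 by auto
          then have "y < ?N1" using opn1 by blast
          then have "x = y" using M(2) \<open>x < ?N1\<close> y by blast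
          then show False using False y by blast
        qed
        have "wopp (close_web c1) x = copp c1 x" using CW_in_opp \<open>x < ?N1\<close> False by blast
        moreover have "wopp (close_web c2) (f x) = copp c2 (f x)" using CW_in_opp fx nf by blast
        ultimately show ?thesis using Fx M(3)[OF \<open>x < ?N1\<close>] cl1 \<open>x < ?N1\<close> by (simp add: F_def)
      qed
      then show ?thesis using rest by blast
    qed
  qed
  then show ?thesis unfolding web_iso_def using bF by blast
qed

lemma clab_H[simp]: "clab (Hres xs s d s' d' ys nj nj' c) = (\<lambda>y. if cnt c \<le> y \<and> y < cnt c + 6 then None else clab c y)"
  by (auto simp: fun_eq_iff)
lemma clab_Y[simp]: "clab (Yres xs s d d' ys nj c) = (\<lambda>y. if cnt c \<le> y \<and> y < cnt c + 3 then None else clab c y)"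
  by (auto simp: fun_eq_iff)
declare Hres_sel(6)[simp del] Yres_sel(6)[simp del]

lemma all0: "(\<forall>k<(0::nat). P k) = True" by simp

definition ptab :: "nat \<Rightarrow> nat list \<Rightarrow> nat \<Rightarrow> nat" where
  "ptab N tab x = (if x < N then x else N + tab ! (x - N))"

lemma ptab_lt: "y < N \<Longrightarrow> ptab N tab y = y" by (simp add: ptab_def)
lemma ptab_ge: "N \<le> y \<Longrightarrow> ptab N tab y = N + tab ! (y - N)" by (simp add: ptab_def)

lemma bij_ptab:
  assumes d: "distinct tab" and s: "set tab = {..<length tab}"
  shows "bij_betw (ptab N tab) {..<N + length tab} {..<N + length tab}"
proof -
  let ?K = "length tab"
  have inj: "inj_on (ptab N tab) {..<N + ?K}"
  proof (rule inj_onI)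
    fix x y assume x: "x \<in> {..<N + ?K}" and y: "y \<in> {..<N + ?K}" and e: "ptab N tab x = ptab N tab y"
    show "x = y"
    proof (cases "x < N"; cases "y < N")
      assume "x < N" "y < N" then show ?thesis using e by (simp add: ptab_def)
    next
      assume "x < N" "\<not> y < N" then show ?thesis using e by (simp add: ptab_def)
    next
      assume "\<not> x < N" "y < N" then show ?thesis using e by (simp add: ptab_def)
    next
      assume a: "\<not> x < N" "\<not> y < N"
      then have "tab ! (x - N) = tab ! (y - N)" using e by (simp add: ptab_def)
      moreover have "x - N < ?K" "y - N < ?K" using x y a by auto
      ultimately have "x - N = y - N" using d by (simp add: nth_eq_iff_index_eq)
      then show ?thesis using a by simp
    qed
  qed
  have sub: "ptab N tab ` {..<N + ?K} \<subseteq> {..<N + ?K}"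
  proof
    fix y assume "y \<in> ptab N tab ` {..<N + ?K}"
    then obtain x where x: "x < N + ?K" "y = ptab N tab x" by auto
    show "y \<in> {..<N + ?K}"
    proof (cases "x < N")
      case True then show ?thesis using x by (simp add: ptab_def)
    next
      case False
      then have "x - N < ?K" using x by simp
      then have "tab ! (x - N) \<in> set tab" by simp
      then have "tab ! (x - N) < ?K" using s by auto
      then show ?thesis using x False by (simp add: ptab_def)
    qed
  qed
  have "ptab N tab ` {..<N + ?K} = {..<N + ?K}" using endo_inj_surj[OF _ sub inj] by simp
  then show ?thesis using inj by (simp add: bij_betw_def)
qed

lemma set_tab: assumes "distinct tab" "\<forall>x\<in>set tab. x < length tab" shows "set tab = {..<length tab}"
proof -
  have "set tab \<subseteq> {..<length tab}" using assms(2) by auto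
  moreover have "card (set tab) = card {..<length tab}" using assms(1) by (simp add: distinct_card)
  ultimately show ?thesis using card_subset_eq[of "{..<length tab}" "set tab"] by blast
qed

lemma bij_ptab': assumes "distinct tab" "\<forall>x\<in>set tab. x < length tab" "length tab = K"
  shows "bij_betw (ptab N tab) {..<N + K} {..<N + K}"
  using bij_ptab[OF assms(1) set_tab[OF assms(1,2)], of N] assms(3) by simp

definition misoQ :: "(nat \<Rightarrow> nat) \<Rightarrow> cfg \<Rightarrow> cfg \<Rightarrow> nat \<Rightarrow> bool" where
  "misoQ f c1 c2 x \<longleftrightarrow> f (copp c1 x) = copp c2 (f x) \<and> f (cnxt c1 x) = cnxt c2 (f x)
        \<and> cout c2 (f x) = cout c1 x \<and> clab c2 (f x) = clab c1 x"

lemma miso_split: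
  assumes "cnt c1 = N + K" "cnt c2 = N + K" "bij_betw f {..<N+K} {..<N+K}"
    "\<And>x. x < N \<Longrightarrow> misoQ f c1 c2 x" "\<forall>k<K. misoQ f c1 c2 (N + k)"
  shows "miso f c1 c2"
  unfolding miso_def
proof (intro conjI allI impI)
  show "bij_betw f {..<cnt c1} {..<cnt c2}" using assms by simp
  fix x assume x: "x < cnt c1"
  have "misoQ f c1 c2 x"
  proof (cases "x < N")
    case True then show ?thesis using assms(4) by blast
  next
    case False
    then have "x - N < K" "x = N + (x - N)" using x assms(1) by auto
    then show ?thesis using assms(5) by metis
  qed
  then show "f (copp c1 x) = copp c2 (f x)" "f (cnxt c1 x) = cnxt c2 (f x)"
        "cout c2 (f x) = cout c1 x" "clab c2 (f x) = clab c1 x" by (simp_all add: misoQ_def)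
qed

definition joinable :: "cfg \<Rightarrow> cfg \<Rightarrow> bool" where
  "joinable a b \<longleftrightarrow> (\<exists>a' b'. gstep\<^sup>*\<^sup>* a a' \<and> gstep\<^sup>*\<^sup>* b b' \<and> ciso a' b')"

lemma joinI: "gstep a a' \<Longrightarrow> gstep b b' \<Longrightarrow> miso f a' b' \<Longrightarrow> strs b' = map (mapd f) (strs a') \<Longrightarrow> joinable a b"
  unfolding joinable_def ciso_def by blast

lemma gH: "strs c = xs @ (s,j,d) # (s',j',d') # ys \<Longrightarrow> s' \<noteq> s \<Longrightarrow> (j,j',nj,nj') \<in> HS \<Longrightarrow>
   gstep c (Hres xs s d s' d' ys nj nj' c)"
  unfolding gstep_iff by blast
lemma gC: "strs c = xs @ (s,j,d) # (s',j',d') # ys \<Longrightarrow> s' \<noteq> s \<Longrightarrow> j = 1 \<Longrightarrow> j' = -1 \<Longrightarrow>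
   gstep c (Cres xs d d' ys c)"
  unfolding gstep_iff by blast
lemma gY: "strs c = xs @ (s,j,d) # (s',j',d') # ys \<Longrightarrow> s' = s \<Longrightarrow> (j,j',nj) \<in> YS \<Longrightarrow>
   gstep c (Yres xs s d d' ys nj c)"
  unfolding gstep_iff by blast

lemma ginv_facts2:
  assumes g: "ginv c" and st: "strs c = xs @ (s1,j1,d1) # (s1',j1',d1') # zs @ (s2,j2,d2) # (s2',j2',d2') # ys"
  shows "d1 < cnt c" "d1' < cnt c" "d2 < cnt c" "d2' < cnt c"
    "d1 \<noteq> d1'" "d1 \<noteq> d2" "d1 \<noteq> d2'" "d1' \<noteq> d2" "d1' \<noteq> d2'" "d2 \<noteq> d2'"
    "\<forall>x<cnt c. copp c x < cnt c \<and> cnxt c x < cnt c"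
    "\<And>x. cnt c \<le> x \<Longrightarrow> copp c x = x"
    "\<forall>e\<in>set xs. snd (snd e) < cnt c" "\<forall>e\<in>set zs. snd (snd e) < cnt c" "\<forall>e\<in>set ys. snd (snd e) < cnt c"
  using g st by (auto simp: ginv_def opn_def dartof_def)

lemma nk_facts: assumes "(d::nat) < N" shows "\<And>k. d \<noteq> N + k" "\<And>k. N + k \<noteq> d"
  "\<And>k. d \<noteq> k + N" "\<And>k. k + N \<noteq> d" "d \<noteq> Suc N" "Suc N \<noteq> d" "d \<noteq> Suc (Suc N)" "Suc (Suc N) \<noteq> d"
  "d \<noteq> N" "N \<noteq> d"
  using assms by simp_all

lemma beyond: assumes "ginv c" shows "\<And>k. copp c (cnt c + k) = cnt c + k" "\<And>k. copp c (k + cnt c) = k + cnt c"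
  "copp c (Suc (cnt c)) = Suc (cnt c)" "copp c (Suc (Suc (cnt c))) = Suc (Suc (cnt c))" "copp c (cnt c) = cnt c"
  using assms by (simp_all add: ginv_def)

lemma map_mapd_ptab: "\<forall>e\<in>set L. snd (snd e) < N \<Longrightarrow> map (mapd (ptab N tab)) L = L"
  by (induction L) (auto simp: ptab_def mapd_def)

lemma comm_HH:
  assumes g: "ginv c" and st: "strs c = xs @ (s1,j1,d1) # (s1',j1',d1') # zs @ (s2,j2,d2) # (s2',j2',d2') # ys"
    and h1: "s1' \<noteq> s1" "(j1,j1',n1,n1') \<in> HS" and h2: "s2' \<noteq> s2" "(j2,j2',n2,n2') \<in> HS"
  shows "joinable (Hres (xs) s1 d1 s1' d1' (zs @ (s2,j2,d2) # (s2',j2',d2') # ys) n1 n1' c)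
                  (Hres (xs @ (s1,j1,d1) # (s1',j1',d1') # zs) s2 d2 s2' d2' (ys) n2 n2' c)"
proof -
  let ?N = "cnt c"
  note F = ginv_facts2[OF g st]
  define a where "a = Hres (xs) s1 d1 s1' d1' (zs @ (s2,j2,d2) # (s2',j2',d2') # ys) n1 n1' c"
  define b where "b = Hres (xs @ (s1,j1,d1) # (s1',j1',d1') # zs) s2 d2 s2' d2' (ys) n2 n2' c"
  define a' where "a' = Hres (xs @ (s1', n1, ?N + 2) # (s1, n1', ?N + 5) # zs) s2 d2 s2' d2' (ys) n2 n2' a"
  define b' where "b' = Hres (xs) s1 d1 s1' d1' (zs @ (s2', n2, ?N + 2) # (s2, n2', ?N + 5) # ys) n1 n1' b"
  define tab where "tab = [6,7,8,9,10,11,0,1,2,3,4,5::nat]"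
  have "gstep a a'" unfolding a'_def by (rule gH[OF _ h2]) (simp add: a_def)
  moreover have "gstep b b'" unfolding b'_def by (rule gH[OF _ h1]) (simp add: b_def)
  moreover have "miso (ptab ?N tab) a' b'"
  proof (rule miso_split[where N = ?N and K = 12])
    show "cnt a' = ?N + 12" "cnt b' = ?N + 12" by (simp_all add: a'_def a_def b'_def b_def)
    show "bij_betw (ptab ?N tab) {..<?N + 12} {..<?N + 12}"
      by (rule bij_ptab') (simp_all add: tab_def)
    have cl: "\<And>y. y < ?N \<Longrightarrow> copp c y < ?N" "\<And>y. y < ?N \<Longrightarrow> cnxt c y < ?N" using F(11) by auto
    note X = nk_facts[OF F(1)] nk_facts[OF F(2)] nk_facts[OF F(3)] nk_facts[OF F(4)]
    show "misoQ (ptab ?N tab) a' b' x" if x: "x < ?N" for x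
    proof -
      note Y = nk_facts[OF x]
      consider "x = d1" | "x = d1'" | "x = d2" | "x = d2'" | "x \<noteq> d1 \<and> x \<noteq> d1' \<and> x \<noteq> d2 \<and> x \<noteq> d2'" by blast
      then show ?thesis
        by cases (simp_all add: misoQ_def a'_def a_def b'_def b_def x X Y cl F(1-10) F(5-10)[symmetric] ptab_lt ptab_ge tab_def)
    qed
    show "\<forall>k<12. misoQ (ptab ?N tab) a' b' (?N + k)"
      unfolding all12
      by (simp add: misoQ_def a'_def a_def b'_def b_def X cl F(1-10) beyond[OF g] ptab_lt ptab_ge tab_def)
  qed
  moreover have "strs b' = map (mapd (ptab ?N tab)) (strs a')"
    using F by (simp add: a'_def a_def b'_def b_def map_mapd_ptab ptab_def tab_def)
  ultimately show ?thesis unfolding a_def b_def by (rule joinI)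
qed

lemma comm_HY:
  assumes g: "ginv c" and st: "strs c = xs @ (s1,j1,d1) # (s1',j1',d1') # zs @ (s2,j2,d2) # (s2',j2',d2') # ys"
    and h1: "s1' \<noteq> s1" "(j1,j1',n1,n1') \<in> HS" and h2: "s2' = s2" "(j2,j2',n2) \<in> YS"
  shows "joinable (Hres (xs) s1 d1 s1' d1' (zs @ (s2,j2,d2) # (s2',j2',d2') # ys) n1 n1' c)
                  (Yres (xs @ (s1,j1,d1) # (s1',j1',d1') # zs) s2 d2 d2' (ys) n2 c)"
proof -
  let ?N = "cnt c"
  note F = ginv_facts2[OF g st]
  define a where "a = Hres (xs) s1 d1 s1' d1' (zs @ (s2,j2,d2) # (s2',j2',d2') # ys) n1 n1' c"
  define b where "b = Yres (xs @ (s1,j1,d1) # (s1',j1',d1') # zs) s2 d2 d2' (ys) n2 c"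
  define a' where "a' = Yres (xs @ (s1', n1, ?N + 2) # (s1, n1', ?N + 5) # zs) s2 d2 d2' (ys) n2 a"
  define b' where "b' = Hres (xs) s1 d1 s1' d1' (zs @ (\<not> s2, n2, ?N + 2) # ys) n1 n1' b"
  define tab where "tab = [3,4,5,6,7,8,0,1,2::nat]"
  have "gstep a a'" unfolding a'_def by (rule gY[OF _ h2]) (simp add: a_def)
  moreover have "gstep b b'" unfolding b'_def by (rule gH[OF _ h1]) (simp add: b_def)
  moreover have "miso (ptab ?N tab) a' b'"
  proof (rule miso_split[where N = ?N and K = 9])
    show "cnt a' = ?N + 9" "cnt b' = ?N + 9" by (simp_all add: a'_def a_def b'_def b_def)
    show "bij_betw (ptab ?N tab) {..<?N + 9} {..<?N + 9}"
      by (rule bij_ptab') (simp_all add: tab_def)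
    have cl: "\<And>y. y < ?N \<Longrightarrow> copp c y < ?N" "\<And>y. y < ?N \<Longrightarrow> cnxt c y < ?N" using F(11) by auto
    note X = nk_facts[OF F(1)] nk_facts[OF F(2)] nk_facts[OF F(3)] nk_facts[OF F(4)]
    show "misoQ (ptab ?N tab) a' b' x" if x: "x < ?N" for x
    proof -
      note Y = nk_facts[OF x]
      consider "x = d1" | "x = d1'" | "x = d2" | "x = d2'" | "x \<noteq> d1 \<and> x \<noteq> d1' \<and> x \<noteq> d2 \<and> x \<noteq> d2'" by blast
      then show ?thesis
        by cases (simp_all add: misoQ_def a'_def a_def b'_def b_def x X Y cl F(1-10) F(5-10)[symmetric] ptab_lt ptab_ge tab_def)
    qed
    show "\<forall>k<9. misoQ (ptab ?N tab) a' b' (?N + k)"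
      unfolding all9
      by (simp add: misoQ_def a'_def a_def b'_def b_def X cl F(1-10) beyond[OF g] ptab_lt ptab_ge tab_def)
  qed
  moreover have "strs b' = map (mapd (ptab ?N tab)) (strs a')"
    using F by (simp add: a'_def a_def b'_def b_def map_mapd_ptab ptab_def tab_def)
  ultimately show ?thesis unfolding a_def b_def by (rule joinI)
qed

lemma comm_HC:
  assumes g: "ginv c" and st: "strs c = xs @ (s1,j1,d1) # (s1',j1',d1') # zs @ (s2,j2,d2) # (s2',j2',d2') # ys"
    and h1: "s1' \<noteq> s1" "(j1,j1',n1,n1') \<in> HS" and h2: "s2' \<noteq> s2" "j2 = 1" "j2' = -1"
  shows "joinable (Hres (xs) s1 d1 s1' d1' (zs @ (s2,j2,d2) # (s2',j2',d2') # ys) n1 n1' c)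
                  (Cres (xs @ (s1,j1,d1) # (s1',j1',d1') # zs) d2 d2' (ys) c)"
proof -
  let ?N = "cnt c"
  note F = ginv_facts2[OF g st]
  define a where "a = Hres (xs) s1 d1 s1' d1' (zs @ (s2,j2,d2) # (s2',j2',d2') # ys) n1 n1' c"
  define b where "b = Cres (xs @ (s1,j1,d1) # (s1',j1',d1') # zs) d2 d2' (ys) c"
  define a' where "a' = Cres (xs @ (s1', n1, ?N + 2) # (s1, n1', ?N + 5) # zs) d2 d2' (ys) a"
  define b' where "b' = Hres (xs) s1 d1 s1' d1' (zs @ ys) n1 n1' b"
  define tab where "tab = [0,1,2,3,4,5::nat]"
  have "gstep a a'" unfolding a'_def by (rule gC[OF _ h2]) (simp add: a_def)
  moreover have "gstep b b'" unfolding b'_def by (rule gH[OF _ h1]) (simp add: b_def)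
  moreover have "miso (ptab ?N tab) a' b'"
  proof (rule miso_split[where N = ?N and K = 6])
    show "cnt a' = ?N + 6" "cnt b' = ?N + 6" by (simp_all add: a'_def a_def b'_def b_def)
    show "bij_betw (ptab ?N tab) {..<?N + 6} {..<?N + 6}"
      by (rule bij_ptab') (simp_all add: tab_def)
    have cl: "\<And>y. y < ?N \<Longrightarrow> copp c y < ?N" "\<And>y. y < ?N \<Longrightarrow> cnxt c y < ?N" using F(11) by auto
    note X = nk_facts[OF F(1)] nk_facts[OF F(2)] nk_facts[OF F(3)] nk_facts[OF F(4)]
    show "misoQ (ptab ?N tab) a' b' x" if x: "x < ?N" for x
    proof -
      note Y = nk_facts[OF x]
      consider "x = d1" | "x = d1'" | "x = d2" | "x = d2'" | "x \<noteq> d1 \<and> x \<noteq> d1' \<and> x \<noteq> d2 \<and> x \<noteq> d2'" by blast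
      then show ?thesis
        by cases (simp_all add: misoQ_def a'_def a_def b'_def b_def x X Y cl F(1-10) F(5-10)[symmetric] ptab_lt ptab_ge tab_def)
    qed
    show "\<forall>k<6. misoQ (ptab ?N tab) a' b' (?N + k)"
      unfolding all6
      by (simp add: misoQ_def a'_def a_def b'_def b_def X cl F(1-10) beyond[OF g] ptab_lt ptab_ge tab_def)
  qed
  moreover have "strs b' = map (mapd (ptab ?N tab)) (strs a')"
    using F by (simp add: a'_def a_def b'_def b_def map_mapd_ptab ptab_def tab_def)
  ultimately show ?thesis unfolding a_def b_def by (rule joinI)
qed

lemma comm_YH:
  assumes g: "ginv c" and st: "strs c = xs @ (s1,j1,d1) # (s1',j1',d1') # zs @ (s2,j2,d2) # (s2',j2',d2') # ys"
    and h1: "s1' = s1" "(j1,j1',n1) \<in> YS" and h2: "s2' \<noteq> s2" "(j2,j2',n2,n2') \<in> HS"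
  shows "joinable (Yres (xs) s1 d1 d1' (zs @ (s2,j2,d2) # (s2',j2',d2') # ys) n1 c)
                  (Hres (xs @ (s1,j1,d1) # (s1',j1',d1') # zs) s2 d2 s2' d2' (ys) n2 n2' c)"
proof -
  let ?N = "cnt c"
  note F = ginv_facts2[OF g st]
  define a where "a = Yres (xs) s1 d1 d1' (zs @ (s2,j2,d2) # (s2',j2',d2') # ys) n1 c"
  define b where "b = Hres (xs @ (s1,j1,d1) # (s1',j1',d1') # zs) s2 d2 s2' d2' (ys) n2 n2' c"
  define a' where "a' = Hres (xs @ (\<not> s1, n1, ?N + 2) # zs) s2 d2 s2' d2' (ys) n2 n2' a"
  define b' where "b' = Yres (xs) s1 d1 d1' (zs @ (s2', n2, ?N + 2) # (s2, n2', ?N + 5) # ys) n1 b"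
  define tab where "tab = [6,7,8,0,1,2,3,4,5::nat]"
  have "gstep a a'" unfolding a'_def by (rule gH[OF _ h2]) (simp add: a_def)
  moreover have "gstep b b'" unfolding b'_def by (rule gY[OF _ h1]) (simp add: b_def)
  moreover have "miso (ptab ?N tab) a' b'"
  proof (rule miso_split[where N = ?N and K = 9])
    show "cnt a' = ?N + 9" "cnt b' = ?N + 9" by (simp_all add: a'_def a_def b'_def b_def)
    show "bij_betw (ptab ?N tab) {..<?N + 9} {..<?N + 9}"
      by (rule bij_ptab') (simp_all add: tab_def)
    have cl: "\<And>y. y < ?N \<Longrightarrow> copp c y < ?N" "\<And>y. y < ?N \<Longrightarrow> cnxt c y < ?N" using F(11) by auto
    note X = nk_facts[OF F(1)] nk_facts[OF F(2)] nk_facts[OF F(3)] nk_facts[OF F(4)]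
    show "misoQ (ptab ?N tab) a' b' x" if x: "x < ?N" for x
    proof -
      note Y = nk_facts[OF x]
      consider "x = d1" | "x = d1'" | "x = d2" | "x = d2'" | "x \<noteq> d1 \<and> x \<noteq> d1' \<and> x \<noteq> d2 \<and> x \<noteq> d2'" by blast
      then show ?thesis
        by cases (simp_all add: misoQ_def a'_def a_def b'_def b_def x X Y cl F(1-10) F(5-10)[symmetric] ptab_lt ptab_ge tab_def)
    qed
    show "\<forall>k<9. misoQ (ptab ?N tab) a' b' (?N + k)"
      unfolding all9
      by (simp add: misoQ_def a'_def a_def b'_def b_def X cl F(1-10) beyond[OF g] ptab_lt ptab_ge tab_def)
  qed
  moreover have "strs b' = map (mapd (ptab ?N tab)) (strs a')"
    using F by (simp add: a'_def a_def b'_def b_def map_mapd_ptab ptab_def tab_def)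
  ultimately show ?thesis unfolding a_def b_def by (rule joinI)
qed

lemma comm_YY:
  assumes g: "ginv c" and st: "strs c = xs @ (s1,j1,d1) # (s1',j1',d1') # zs @ (s2,j2,d2) # (s2',j2',d2') # ys"
    and h1: "s1' = s1" "(j1,j1',n1) \<in> YS" and h2: "s2' = s2" "(j2,j2',n2) \<in> YS"
  shows "joinable (Yres (xs) s1 d1 d1' (zs @ (s2,j2,d2) # (s2',j2',d2') # ys) n1 c)
                  (Yres (xs @ (s1,j1,d1) # (s1',j1',d1') # zs) s2 d2 d2' (ys) n2 c)"
proof -
  let ?N = "cnt c"
  note F = ginv_facts2[OF g st]
  define a where "a = Yres (xs) s1 d1 d1' (zs @ (s2,j2,d2) # (s2',j2',d2') # ys) n1 c"
  define b where "b = Yres (xs @ (s1,j1,d1) # (s1',j1',d1') # zs) s2 d2 d2' (ys) n2 c"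
  define a' where "a' = Yres (xs @ (\<not> s1, n1, ?N + 2) # zs) s2 d2 d2' (ys) n2 a"
  define b' where "b' = Yres (xs) s1 d1 d1' (zs @ (\<not> s2, n2, ?N + 2) # ys) n1 b"
  define tab where "tab = [3,4,5,0,1,2::nat]"
  have "gstep a a'" unfolding a'_def by (rule gY[OF _ h2]) (simp add: a_def)
  moreover have "gstep b b'" unfolding b'_def by (rule gY[OF _ h1]) (simp add: b_def)
  moreover have "miso (ptab ?N tab) a' b'"
  proof (rule miso_split[where N = ?N and K = 6])
    show "cnt a' = ?N + 6" "cnt b' = ?N + 6" by (simp_all add: a'_def a_def b'_def b_def)
    show "bij_betw (ptab ?N tab) {..<?N + 6} {..<?N + 6}"
      by (rule bij_ptab') (simp_all add: tab_def)
    have cl: "\<And>y. y < ?N \<Longrightarrow> copp c y < ?N" "\<And>y. y < ?N \<Longrightarrow> cnxt c y < ?N" using F(11) by auto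
    note X = nk_facts[OF F(1)] nk_facts[OF F(2)] nk_facts[OF F(3)] nk_facts[OF F(4)]
    show "misoQ (ptab ?N tab) a' b' x" if x: "x < ?N" for x
    proof -
      note Y = nk_facts[OF x]
      consider "x = d1" | "x = d1'" | "x = d2" | "x = d2'" | "x \<noteq> d1 \<and> x \<noteq> d1' \<and> x \<noteq> d2 \<and> x \<noteq> d2'" by blast
      then show ?thesis
        by cases (simp_all add: misoQ_def a'_def a_def b'_def b_def x X Y cl F(1-10) F(5-10)[symmetric] ptab_lt ptab_ge tab_def)
    qed
    show "\<forall>k<6. misoQ (ptab ?N tab) a' b' (?N + k)"
      unfolding all6
      by (simp add: misoQ_def a'_def a_def b'_def b_def X cl F(1-10) beyond[OF g] ptab_lt ptab_ge tab_def)
  qed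
  moreover have "strs b' = map (mapd (ptab ?N tab)) (strs a')"
    using F by (simp add: a'_def a_def b'_def b_def map_mapd_ptab ptab_def tab_def)
  ultimately show ?thesis unfolding a_def b_def by (rule joinI)
qed

lemma comm_YC:
  assumes g: "ginv c" and st: "strs c = xs @ (s1,j1,d1) # (s1',j1',d1') # zs @ (s2,j2,d2) # (s2',j2',d2') # ys"
    and h1: "s1' = s1" "(j1,j1',n1) \<in> YS" and h2: "s2' \<noteq> s2" "j2 = 1" "j2' = -1"
  shows "joinable (Yres (xs) s1 d1 d1' (zs @ (s2,j2,d2) # (s2',j2',d2') # ys) n1 c)
                  (Cres (xs @ (s1,j1,d1) # (s1',j1',d1') # zs) d2 d2' (ys) c)"
proof -
  let ?N = "cnt c"
  note F = ginv_facts2[OF g st]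
  define a where "a = Yres (xs) s1 d1 d1' (zs @ (s2,j2,d2) # (s2',j2',d2') # ys) n1 c"
  define b where "b = Cres (xs @ (s1,j1,d1) # (s1',j1',d1') # zs) d2 d2' (ys) c"
  define a' where "a' = Cres (xs @ (\<not> s1, n1, ?N + 2) # zs) d2 d2' (ys) a"
  define b' where "b' = Yres (xs) s1 d1 d1' (zs @ ys) n1 b"
  define tab where "tab = [0,1,2::nat]"
  have "gstep a a'" unfolding a'_def by (rule gC[OF _ h2]) (simp add: a_def)
  moreover have "gstep b b'" unfolding b'_def by (rule gY[OF _ h1]) (simp add: b_def)
  moreover have "miso (ptab ?N tab) a' b'"
  proof (rule miso_split[where N = ?N and K = 3])
    show "cnt a' = ?N + 3" "cnt b' = ?N + 3" by (simp_all add: a'_def a_def b'_def b_def)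
    show "bij_betw (ptab ?N tab) {..<?N + 3} {..<?N + 3}"
      by (rule bij_ptab') (simp_all add: tab_def)
    have cl: "\<And>y. y < ?N \<Longrightarrow> copp c y < ?N" "\<And>y. y < ?N \<Longrightarrow> cnxt c y < ?N" using F(11) by auto
    note X = nk_facts[OF F(1)] nk_facts[OF F(2)] nk_facts[OF F(3)] nk_facts[OF F(4)]
    show "misoQ (ptab ?N tab) a' b' x" if x: "x < ?N" for x
    proof -
      note Y = nk_facts[OF x]
      consider "x = d1" | "x = d1'" | "x = d2" | "x = d2'" | "x \<noteq> d1 \<and> x \<noteq> d1' \<and> x \<noteq> d2 \<and> x \<noteq> d2'" by blast
      then show ?thesis
        by cases (simp_all add: misoQ_def a'_def a_def b'_def b_def x X Y cl F(1-10) F(5-10)[symmetric] ptab_lt ptab_ge tab_def)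
    qed
    show "\<forall>k<3. misoQ (ptab ?N tab) a' b' (?N + k)"
      unfolding all3
      by (simp add: misoQ_def a'_def a_def b'_def b_def X cl F(1-10) beyond[OF g] ptab_lt ptab_ge tab_def)
  qed
  moreover have "strs b' = map (mapd (ptab ?N tab)) (strs a')"
    using F by (simp add: a'_def a_def b'_def b_def map_mapd_ptab ptab_def tab_def)
  ultimately show ?thesis unfolding a_def b_def by (rule joinI)
qed

lemma comm_CH:
  assumes g: "ginv c" and st: "strs c = xs @ (s1,j1,d1) # (s1',j1',d1') # zs @ (s2,j2,d2) # (s2',j2',d2') # ys"
    and h1: "s1' \<noteq> s1" "j1 = 1" "j1' = -1" and h2: "s2' \<noteq> s2" "(j2,j2',n2,n2') \<in> HS"
  shows "joinable (Cres (xs) d1 d1' (zs @ (s2,j2,d2) # (s2',j2',d2') # ys) c)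
                  (Hres (xs @ (s1,j1,d1) # (s1',j1',d1') # zs) s2 d2 s2' d2' (ys) n2 n2' c)"
proof -
  let ?N = "cnt c"
  note F = ginv_facts2[OF g st]
  define a where "a = Cres (xs) d1 d1' (zs @ (s2,j2,d2) # (s2',j2',d2') # ys) c"
  define b where "b = Hres (xs @ (s1,j1,d1) # (s1',j1',d1') # zs) s2 d2 s2' d2' (ys) n2 n2' c"
  define a' where "a' = Hres (xs @ zs) s2 d2 s2' d2' (ys) n2 n2' a"
  define b' where "b' = Cres (xs) d1 d1' (zs @ (s2', n2, ?N + 2) # (s2, n2', ?N + 5) # ys) b"
  define tab where "tab = [0,1,2,3,4,5::nat]"
  have "gstep a a'" unfolding a'_def by (rule gH[OF _ h2]) (simp add: a_def)
  moreover have "gstep b b'" unfolding b'_def by (rule gC[OF _ h1]) (simp add: b_def)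
  moreover have "miso (ptab ?N tab) a' b'"
  proof (rule miso_split[where N = ?N and K = 6])
    show "cnt a' = ?N + 6" "cnt b' = ?N + 6" by (simp_all add: a'_def a_def b'_def b_def)
    show "bij_betw (ptab ?N tab) {..<?N + 6} {..<?N + 6}"
      by (rule bij_ptab') (simp_all add: tab_def)
    have cl: "\<And>y. y < ?N \<Longrightarrow> copp c y < ?N" "\<And>y. y < ?N \<Longrightarrow> cnxt c y < ?N" using F(11) by auto
    note X = nk_facts[OF F(1)] nk_facts[OF F(2)] nk_facts[OF F(3)] nk_facts[OF F(4)]
    show "misoQ (ptab ?N tab) a' b' x" if x: "x < ?N" for x
    proof -
      note Y = nk_facts[OF x]
      consider "x = d1" | "x = d1'" | "x = d2" | "x = d2'" | "x \<noteq> d1 \<and> x \<noteq> d1' \<and> x \<noteq> d2 \<and> x \<noteq> d2'" by blast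
      then show ?thesis
        by cases (simp_all add: misoQ_def a'_def a_def b'_def b_def x X Y cl F(1-10) F(5-10)[symmetric] ptab_lt ptab_ge tab_def)
    qed
    show "\<forall>k<6. misoQ (ptab ?N tab) a' b' (?N + k)"
      unfolding all6
      by (simp add: misoQ_def a'_def a_def b'_def b_def X cl F(1-10) beyond[OF g] ptab_lt ptab_ge tab_def)
  qed
  moreover have "strs b' = map (mapd (ptab ?N tab)) (strs a')"
    using F by (simp add: a'_def a_def b'_def b_def map_mapd_ptab ptab_def tab_def)
  ultimately show ?thesis unfolding a_def b_def by (rule joinI)
qed

lemma comm_CY:
  assumes g: "ginv c" and st: "strs c = xs @ (s1,j1,d1) # (s1',j1',d1') # zs @ (s2,j2,d2) # (s2',j2',d2') # ys"
    and h1: "s1' \<noteq> s1" "j1 = 1" "j1' = -1" and h2: "s2' = s2" "(j2,j2',n2) \<in> YS"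
  shows "joinable (Cres (xs) d1 d1' (zs @ (s2,j2,d2) # (s2',j2',d2') # ys) c)
                  (Yres (xs @ (s1,j1,d1) # (s1',j1',d1') # zs) s2 d2 d2' (ys) n2 c)"
proof -
  let ?N = "cnt c"
  note F = ginv_facts2[OF g st]
  define a where "a = Cres (xs) d1 d1' (zs @ (s2,j2,d2) # (s2',j2',d2') # ys) c"
  define b where "b = Yres (xs @ (s1,j1,d1) # (s1',j1',d1') # zs) s2 d2 d2' (ys) n2 c"
  define a' where "a' = Yres (xs @ zs) s2 d2 d2' (ys) n2 a"
  define b' where "b' = Cres (xs) d1 d1' (zs @ (\<not> s2, n2, ?N + 2) # ys) b"
  define tab where "tab = [0,1,2::nat]"
  have "gstep a a'" unfolding a'_def by (rule gY[OF _ h2]) (simp add: a_def)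
  moreover have "gstep b b'" unfolding b'_def by (rule gC[OF _ h1]) (simp add: b_def)
  moreover have "miso (ptab ?N tab) a' b'"
  proof (rule miso_split[where N = ?N and K = 3])
    show "cnt a' = ?N + 3" "cnt b' = ?N + 3" by (simp_all add: a'_def a_def b'_def b_def)
    show "bij_betw (ptab ?N tab) {..<?N + 3} {..<?N + 3}"
      by (rule bij_ptab') (simp_all add: tab_def)
    have cl: "\<And>y. y < ?N \<Longrightarrow> copp c y < ?N" "\<And>y. y < ?N \<Longrightarrow> cnxt c y < ?N" using F(11) by auto
    note X = nk_facts[OF F(1)] nk_facts[OF F(2)] nk_facts[OF F(3)] nk_facts[OF F(4)]
    show "misoQ (ptab ?N tab) a' b' x" if x: "x < ?N" for x
    proof -
      note Y = nk_facts[OF x]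
      consider "x = d1" | "x = d1'" | "x = d2" | "x = d2'" | "x \<noteq> d1 \<and> x \<noteq> d1' \<and> x \<noteq> d2 \<and> x \<noteq> d2'" by blast
      then show ?thesis
        by cases (simp_all add: misoQ_def a'_def a_def b'_def b_def x X Y cl F(1-10) F(5-10)[symmetric] ptab_lt ptab_ge tab_def)
    qed
    show "\<forall>k<3. misoQ (ptab ?N tab) a' b' (?N + k)"
      unfolding all3
      by (simp add: misoQ_def a'_def a_def b'_def b_def X cl F(1-10) beyond[OF g] ptab_lt ptab_ge tab_def)
  qed
  moreover have "strs b' = map (mapd (ptab ?N tab)) (strs a')"
    using F by (simp add: a'_def a_def b'_def b_def map_mapd_ptab ptab_def tab_def)
  ultimately show ?thesis unfolding a_def b_def by (rule joinI)
qed

lemma comm_CC: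
  assumes g: "ginv c" and st: "strs c = xs @ (s1,j1,d1) # (s1',j1',d1') # zs @ (s2,j2,d2) # (s2',j2',d2') # ys"
    and h1: "s1' \<noteq> s1" "j1 = 1" "j1' = -1" and h2: "s2' \<noteq> s2" "j2 = 1" "j2' = -1"
  shows "joinable (Cres (xs) d1 d1' (zs @ (s2,j2,d2) # (s2',j2',d2') # ys) c)
                  (Cres (xs @ (s1,j1,d1) # (s1',j1',d1') # zs) d2 d2' (ys) c)"
proof -
  let ?N = "cnt c"
  note F = ginv_facts2[OF g st]
  define a where "a = Cres (xs) d1 d1' (zs @ (s2,j2,d2) # (s2',j2',d2') # ys) c"
  define b where "b = Cres (xs @ (s1,j1,d1) # (s1',j1',d1') # zs) d2 d2' (ys) c"
  define a' where "a' = Cres (xs @ zs) d2 d2' (ys) a"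
  define b' where "b' = Cres (xs) d1 d1' (zs @ ys) b"
  define tab where "tab = ([]::nat list)"
  have "gstep a a'" unfolding a'_def by (rule gC[OF _ h2]) (simp add: a_def)
  moreover have "gstep b b'" unfolding b'_def by (rule gC[OF _ h1]) (simp add: b_def)
  moreover have "miso (ptab ?N tab) a' b'"
  proof (rule miso_split[where N = ?N and K = 0])
    show "cnt a' = ?N + 0" "cnt b' = ?N + 0" by (simp_all add: a'_def a_def b'_def b_def)
    show "bij_betw (ptab ?N tab) {..<?N + 0} {..<?N + 0}"
      by (rule bij_ptab') (simp_all add: tab_def)
    have cl: "\<And>y. y < ?N \<Longrightarrow> copp c y < ?N" "\<And>y. y < ?N \<Longrightarrow> cnxt c y < ?N" using F(11) by auto
    note X = nk_facts[OF F(1)] nk_facts[OF F(2)] nk_facts[OF F(3)] nk_facts[OF F(4)]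
    show "misoQ (ptab ?N tab) a' b' x" if x: "x < ?N" for x
    proof -
      note Y = nk_facts[OF x]
      consider "x = d1" | "x = d1'" | "x = d2" | "x = d2'" | "x \<noteq> d1 \<and> x \<noteq> d1' \<and> x \<noteq> d2 \<and> x \<noteq> d2'" by blast
      then show ?thesis
        by cases (simp_all add: misoQ_def a'_def a_def b'_def b_def x X Y cl F(1-10) F(5-10)[symmetric] ptab_lt ptab_ge tab_def)
    qed
    show "\<forall>k<0. misoQ (ptab ?N tab) a' b' (?N + k)"
      unfolding all0
      by (simp add: misoQ_def a'_def a_def b'_def b_def X cl F(1-10) beyond[OF g] ptab_lt ptab_ge tab_def)
  qed
  moreover have "strs b' = map (mapd (ptab ?N tab)) (strs a')"
    using F by (simp add: a'_def a_def b'_def b_def map_mapd_ptab ptab_def tab_def)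
  ultimately show ?thesis unfolding a_def b_def by (rule joinI)
qed

lemma ginv_facts3:
  assumes g: "ginv c" and st: "strs c = xs @ (s1,j1,d1) # (s2,j2,d2) # (s3,j3,d3) # ys"
  shows "d1 < cnt c" "d2 < cnt c" "d3 < cnt c"
    "d1 \<noteq> d2" "d1 \<noteq> d3" "d2 \<noteq> d3"
    "\<forall>x<cnt c. copp c x < cnt c \<and> cnxt c x < cnt c"
    "\<forall>e\<in>set xs. snd (snd e) < cnt c" "\<forall>e\<in>set ys. snd (snd e) < cnt c"
  using g st by (auto simp: ginv_def opn_def dartof_def)

lemma ovc_YY:
  assumes g: "ginv c" and st: "strs c = xs @ (s,1,d1) # (s,0,d2) # (s,-1,d3) # ys"
  shows "joinable (Yres xs s d1 d2 ((s,-1,d3) # ys) 1 c)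
                  (Yres (xs @ [(s,1,d1)]) s d2 d3 ys (-1) c)"
proof -
  let ?N = "cnt c"
  note F = ginv_facts3[OF g st]
  define a where "a = Yres xs s d1 d2 ((s,-1,d3) # ys) 1 c"
  define b where "b = Yres (xs @ [(s,1,d1)]) s d2 d3 ys (-1) c"
  define a' where "a' = Cres xs (?N + 2) d3 ys a"
  define b' where "b' = Cres xs d1 (?N + 2) ys b"
  define tab where "tab = [2,0,1::nat]"
  have "gstep a a'" unfolding a'_def by (rule gC[where s="\<not> s" and s'=s and j=1 and j'="-1"]) (auto simp: a_def HS_def YS_def)
  moreover have "gstep b b'" unfolding b'_def by (rule gC[where s=s and s'="\<not> s" and j=1 and j'="-1"]) (auto simp: b_def HS_def YS_def)
  moreover have "miso (ptab ?N tab) a' b'"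
  proof (rule miso_split[where N = ?N and K = 3])
    show "cnt a' = ?N + 3" "cnt b' = ?N + 3" by (simp_all add: a'_def a_def b'_def b_def)
    show "bij_betw (ptab ?N tab) {..<?N + 3} {..<?N + 3}"
      by (rule bij_ptab') (simp_all add: tab_def)
    have cl: "\<And>y. y < ?N \<Longrightarrow> copp c y < ?N" "\<And>y. y < ?N \<Longrightarrow> cnxt c y < ?N" using F(7) by auto
    note X = nk_facts[OF F(1)] nk_facts[OF F(2)] nk_facts[OF F(3)]
    show "misoQ (ptab ?N tab) a' b' x" if x: "x < ?N" for x
    proof -
      note Y = nk_facts[OF x]
      consider "x = d1" | "x = d2" | "x = d3" | "x \<noteq> d1 \<and> x \<noteq> d2 \<and> x \<noteq> d3" by blast
      then show ?thesis
        by cases (simp_all add: misoQ_def a'_def a_def b'_def b_def x X Y cl F(1-6) F(4-6)[symmetric] ptab_lt ptab_ge tab_def)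
    qed
    show "\<forall>k<3. misoQ (ptab ?N tab) a' b' (?N + k)"
      unfolding all3
      by (simp add: misoQ_def a'_def a_def b'_def b_def X cl F(1-6) beyond[OF g] ptab_lt ptab_ge tab_def)
  qed
  moreover have "strs b' = map (mapd (ptab ?N tab)) (strs a')"
    using F by (simp add: a'_def a_def b'_def b_def map_mapd_ptab ptab_def tab_def)
  ultimately show ?thesis unfolding a_def b_def by (rule joinI)
qed

lemma ovc_YH:
  assumes g: "ginv c" and st: "strs c = xs @ (s,1,d1) # (s,0,d2) # (\<not> s,j3,d3) # ys" and ex: "j3 = -1 \<or> j3 = 0"
  shows "joinable (Yres xs s d1 d2 ((\<not> s,j3,d3) # ys) 1 c)
                  (Hres (xs @ [(s,1,d1)]) s d2 (\<not> s) d3 ys (-1) (j3 + 1) c)"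
proof -
  let ?N = "cnt c"
  note F = ginv_facts3[OF g st]
  define a where "a = Yres xs s d1 d2 ((\<not> s,j3,d3) # ys) 1 c"
  define b where "b = Hres (xs @ [(s,1,d1)]) s d2 (\<not> s) d3 ys (-1) (j3 + 1) c"
  define a' where "a' = Yres xs (\<not> s) (?N + 2) d3 ys (j3 + 1) a"
  define b' where "b' = Cres xs d1 (?N + 2) ((s, j3 + 1, ?N + 5) # ys) b"
  define tab where "tab = [2,0,1,4,3,5::nat]"
  have "gstep a a'" unfolding a'_def by (rule gY[where s="\<not> s" and s'="\<not> s" and j=1 and j'=j3]) (use ex in \<open>auto simp: a_def HS_def YS_def\<close>)
  moreover have "gstep b b'" unfolding b'_def by (rule gC[where s=s and s'="\<not> s" and j=1 and j'="-1"]) (use ex in \<open>auto simp: b_def HS_def YS_def\<close>)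
  moreover have "miso (ptab ?N tab) a' b'"
  proof (rule miso_split[where N = ?N and K = 6])
    show "cnt a' = ?N + 6" "cnt b' = ?N + 6" by (simp_all add: a'_def a_def b'_def b_def)
    show "bij_betw (ptab ?N tab) {..<?N + 6} {..<?N + 6}"
      by (rule bij_ptab') (simp_all add: tab_def)
    have cl: "\<And>y. y < ?N \<Longrightarrow> copp c y < ?N" "\<And>y. y < ?N \<Longrightarrow> cnxt c y < ?N" using F(7) by auto
    note X = nk_facts[OF F(1)] nk_facts[OF F(2)] nk_facts[OF F(3)]
    show "misoQ (ptab ?N tab) a' b' x" if x: "x < ?N" for x
    proof -
      note Y = nk_facts[OF x]
      consider "x = d1" | "x = d2" | "x = d3" | "x \<noteq> d1 \<and> x \<noteq> d2 \<and> x \<noteq> d3" by blast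
      then show ?thesis
        by cases (simp_all add: misoQ_def a'_def a_def b'_def b_def x X Y cl F(1-6) F(4-6)[symmetric] ptab_lt ptab_ge tab_def)
    qed
    show "\<forall>k<6. misoQ (ptab ?N tab) a' b' (?N + k)"
      unfolding all6
      by (simp add: misoQ_def a'_def a_def b'_def b_def X cl F(1-6) beyond[OF g] ptab_lt ptab_ge tab_def)
  qed
  moreover have "strs b' = map (mapd (ptab ?N tab)) (strs a')"
    using F by (simp add: a'_def a_def b'_def b_def map_mapd_ptab ptab_def tab_def)
  ultimately show ?thesis unfolding a_def b_def by (rule joinI)
qed

lemma ovc_HH:
  assumes g: "ginv c" and st: "strs c = xs @ (s,j1,d1) # (\<not> s,0,d2) # (s,j3,d3) # ys" and ex: "j1 = 0 \<or> j1 = 1" "j3 = -1 \<or> j3 = 0"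
  shows "joinable (Hres xs s d1 (\<not> s) d2 ((s,j3,d3) # ys) (j1 - 1) 1 c)
                  (Hres (xs @ [(s,j1,d1)]) (\<not> s) d2 s d3 ys (-1) (j3 + 1) c)"
proof -
  let ?N = "cnt c"
  note F = ginv_facts3[OF g st]
  define a where "a = Hres xs s d1 (\<not> s) d2 ((s,j3,d3) # ys) (j1 - 1) 1 c"
  define b where "b = Hres (xs @ [(s,j1,d1)]) (\<not> s) d2 s d3 ys (-1) (j3 + 1) c"
  define a' where "a' = Yres (xs @ [(\<not> s, j1 - 1, ?N + 2)]) s (?N + 5) d3 ys (j3 + 1) a"
  define b' where "b' = Yres xs s d1 (?N + 2) ((\<not> s, j3 + 1, ?N + 5) # ys) (j1 - 1) b"
  define tab where "tab = [6,7,8,0,2,1,4,3,5::nat]"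
  have "gstep a a'" unfolding a'_def by (rule gY[where s=s and s'=s and j=1 and j'=j3]) (use ex in \<open>auto simp: a_def HS_def YS_def\<close>)
  moreover have "gstep b b'" unfolding b'_def by (rule gY[where s=s and s'=s and j=j1 and j'="-1"]) (use ex in \<open>auto simp: b_def HS_def YS_def\<close>)
  moreover have "miso (ptab ?N tab) a' b'"
  proof (rule miso_split[where N = ?N and K = 9])
    show "cnt a' = ?N + 9" "cnt b' = ?N + 9" by (simp_all add: a'_def a_def b'_def b_def)
    show "bij_betw (ptab ?N tab) {..<?N + 9} {..<?N + 9}"
      by (rule bij_ptab') (simp_all add: tab_def)
    have cl: "\<And>y. y < ?N \<Longrightarrow> copp c y < ?N" "\<And>y. y < ?N \<Longrightarrow> cnxt c y < ?N" using F(7) by auto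
    note X = nk_facts[OF F(1)] nk_facts[OF F(2)] nk_facts[OF F(3)]
    show "misoQ (ptab ?N tab) a' b' x" if x: "x < ?N" for x
    proof -
      note Y = nk_facts[OF x]
      consider "x = d1" | "x = d2" | "x = d3" | "x \<noteq> d1 \<and> x \<noteq> d2 \<and> x \<noteq> d3" by blast
      then show ?thesis
        by cases (simp_all add: misoQ_def a'_def a_def b'_def b_def x X Y cl F(1-6) F(4-6)[symmetric] ptab_lt ptab_ge tab_def)
    qed
    show "\<forall>k<9. misoQ (ptab ?N tab) a' b' (?N + k)"
      unfolding all9
      by (simp add: misoQ_def a'_def a_def b'_def b_def X cl F(1-6) beyond[OF g] ptab_lt ptab_ge tab_def)
  qed
  moreover have "strs b' = map (mapd (ptab ?N tab)) (strs a')"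
    using F by (simp add: a'_def a_def b'_def b_def map_mapd_ptab ptab_def tab_def)
  ultimately show ?thesis unfolding a_def b_def by (rule joinI)
qed

lemma ovc_HY:
  assumes g: "ginv c" and st: "strs c = xs @ (s,j1,d1) # (\<not> s,0,d2) # (\<not> s,-1,d3) # ys" and ex: "j1 = 0 \<or> j1 = 1"
  shows "joinable (Hres xs s d1 (\<not> s) d2 ((\<not> s,-1,d3) # ys) (j1 - 1) 1 c)
                  (Yres (xs @ [(s,j1,d1)]) (\<not> s) d2 d3 ys (-1) c)"
proof -
  let ?N = "cnt c"
  note F = ginv_facts3[OF g st]
  define a where "a = Hres xs s d1 (\<not> s) d2 ((\<not> s,-1,d3) # ys) (j1 - 1) 1 c"
  define b where "b = Yres (xs @ [(s,j1,d1)]) (\<not> s) d2 d3 ys (-1) c"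
  define a' where "a' = Cres (xs @ [(\<not> s, j1 - 1, ?N + 2)]) (?N + 5) d3 ys a"
  define b' where "b' = Yres xs s d1 (?N + 2) ys (j1 - 1) b"
  define tab where "tab = [3,4,5,0,2,1::nat]"
  have "gstep a a'" unfolding a'_def by (rule gC[where s=s and s'="\<not> s" and j=1 and j'="-1"]) (use ex in \<open>auto simp: a_def HS_def YS_def\<close>)
  moreover have "gstep b b'" unfolding b'_def by (rule gY[where s=s and s'=s and j=j1 and j'="-1"]) (use ex in \<open>auto simp: b_def HS_def YS_def\<close>)
  moreover have "miso (ptab ?N tab) a' b'"
  proof (rule miso_split[where N = ?N and K = 6])
    show "cnt a' = ?N + 6" "cnt b' = ?N + 6" by (simp_all add: a'_def a_def b'_def b_def)
    show "bij_betw (ptab ?N tab) {..<?N + 6} {..<?N + 6}"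
      by (rule bij_ptab') (simp_all add: tab_def)
    have cl: "\<And>y. y < ?N \<Longrightarrow> copp c y < ?N" "\<And>y. y < ?N \<Longrightarrow> cnxt c y < ?N" using F(7) by auto
    note X = nk_facts[OF F(1)] nk_facts[OF F(2)] nk_facts[OF F(3)]
    show "misoQ (ptab ?N tab) a' b' x" if x: "x < ?N" for x
    proof -
      note Y = nk_facts[OF x]
      consider "x = d1" | "x = d2" | "x = d3" | "x \<noteq> d1 \<and> x \<noteq> d2 \<and> x \<noteq> d3" by blast
      then show ?thesis
        by cases (simp_all add: misoQ_def a'_def a_def b'_def b_def x X Y cl F(1-6) F(4-6)[symmetric] ptab_lt ptab_ge tab_def)
    qed
    show "\<forall>k<6. misoQ (ptab ?N tab) a' b' (?N + k)"
      unfolding all6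
      by (simp add: misoQ_def a'_def a_def b'_def b_def X cl F(1-6) beyond[OF g] ptab_lt ptab_ge tab_def)
  qed
  moreover have "strs b' = map (mapd (ptab ?N tab)) (strs a')"
    using F by (simp add: a'_def a_def b'_def b_def map_mapd_ptab ptab_def tab_def)
  ultimately show ?thesis unfolding a_def b_def by (rule joinI)
qed

lemma ov_YY:
  assumes g: "ginv c" and st: "strs c = xs @ (s1,j1,d1) # (s2,j2,d2) # (s3,j3,d3) # ys"
    and h: "s2 = s1" "(j1,j2,n1) \<in> YS" "s3 = s2" "(j2,j3,n2) \<in> YS"
  shows "joinable (Yres xs s1 d1 d2 ((s3,j3,d3) # ys) n1 c) (Yres (xs @ [(s1,j1,d1)]) s2 d2 d3 ys n2 c)"
proof -
  have v: "j1 = 1" "j2 = 0" "j3 = -1" "n1 = 1" "n2 = -1" using h by (auto simp: YS_def)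
  have st': "strs c = xs @ (s1,1,d1) # (s1,0,d2) # (s1,-1,d3) # ys" using st v h by simp
  show ?thesis using ovc_YY[OF g st'] v h by simp
qed

lemma ov_YH:
  assumes g: "ginv c" and st: "strs c = xs @ (s1,j1,d1) # (s2,j2,d2) # (s3,j3,d3) # ys"
    and h: "s2 = s1" "(j1,j2,n1) \<in> YS" "s3 \<noteq> s2" "(j2,j3,m1,m2) \<in> HS"
  shows "joinable (Yres xs s1 d1 d2 ((s3,j3,d3) # ys) n1 c) (Hres (xs @ [(s1,j1,d1)]) s2 d2 s3 d3 ys m1 m2 c)"
proof -
  have v: "j1 = 1" "j2 = 0" "n1 = 1" "m1 = -1" "m2 = j3 + 1" "s3 = (\<not> s1)" and ex: "j3 = -1 \<or> j3 = 0"
    using h by (auto simp: YS_def HS_def)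
  have st': "strs c = xs @ (s1,1,d1) # (s1,0,d2) # (\<not> s1,j3,d3) # ys" using st v h by simp
  show ?thesis using ovc_YH[OF g st' ex] v h by simp
qed

lemma ov_HH:
  assumes g: "ginv c" and st: "strs c = xs @ (s1,j1,d1) # (s2,j2,d2) # (s3,j3,d3) # ys"
    and h: "s2 \<noteq> s1" "(j1,j2,n1,n1') \<in> HS" "s3 \<noteq> s2" "(j2,j3,m1,m2) \<in> HS"
  shows "joinable (Hres xs s1 d1 s2 d2 ((s3,j3,d3) # ys) n1 n1' c) (Hres (xs @ [(s1,j1,d1)]) s2 d2 s3 d3 ys m1 m2 c)"
proof -
  have v: "j2 = 0" "n1 = j1 - 1" "n1' = 1" "m1 = -1" "m2 = j3 + 1" "s2 = (\<not> s1)" "s3 = s1"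
    and ex: "j1 = 0 \<or> j1 = 1" "j3 = -1 \<or> j3 = 0"
    using h by (auto simp: HS_def)
  have st': "strs c = xs @ (s1,j1,d1) # (\<not> s1,0,d2) # (s1,j3,d3) # ys" using st v h by simp
  show ?thesis using ovc_HH[OF g st' ex] v h by simp
qed

lemma ov_HY:
  assumes g: "ginv c" and st: "strs c = xs @ (s1,j1,d1) # (s2,j2,d2) # (s3,j3,d3) # ys"
    and h: "s2 \<noteq> s1" "(j1,j2,n1,n1') \<in> HS" "s3 = s2" "(j2,j3,m1) \<in> YS"
  shows "joinable (Hres xs s1 d1 s2 d2 ((s3,j3,d3) # ys) n1 n1' c) (Yres (xs @ [(s1,j1,d1)]) s2 d2 d3 ys m1 c)"
proof -
  have v: "j2 = 0" "j3 = -1" "n1 = j1 - 1" "n1' = 1" "m1 = -1" "s2 = (\<not> s1)" "s3 = (\<not> s1)"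
    and ex: "j1 = 0 \<or> j1 = 1"
    using h by (auto simp: HS_def YS_def)
  have st': "strs c = xs @ (s1,j1,d1) # (\<not> s1,0,d2) # (\<not> s1,-1,d3) # ys" using st v h by simp
  show ?thesis using ovc_HY[OF g st' ex] v h by simp
qed

definition RS :: "(bool \<times> int \<times> nat) list \<Rightarrow> bool \<times> int \<times> nat \<Rightarrow> bool \<times> int \<times> nat \<Rightarrow> (bool \<times> int \<times> nat) list \<Rightarrow> cfg \<Rightarrow> cfg \<Rightarrow> bool" where
  "RS xs A B ys c a \<longleftrightarrow> (case A of (s,j,d) \<Rightarrow> case B of (s',j',d') \<Rightarrow>
   ((s' \<noteq> s \<and> (\<exists>nj nj'. (j,j',nj,nj') \<in> HS \<and> a = Hres xs s d s' d' ys nj nj' c)) \<or>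
    (s' \<noteq> s \<and> j = 1 \<and> j' = -1 \<and> a = Cres xs d d' ys c) \<or>
    (s' = s \<and> (\<exists>nj. (j,j',nj) \<in> YS \<and> a = Yres xs s d d' ys nj c))))"

lemma gstep_RS: "gstep c a \<longleftrightarrow> (\<exists>xs A B ys. strs c = xs @ A # B # ys \<and> RS xs A B ys c a)"
  unfolding gstep_iff RS_def by auto

lemma RS_same: "RS xs A B ys c a \<Longrightarrow> RS xs A B ys c b \<Longrightarrow> a = b"
  by (cases A; cases B) (auto simp: RS_def HS_def YS_def)

lemma RS_disj:
  assumes g: "ginv c" and st: "strs c = xs @ A # B # zs @ C # D # ys"
    and r1: "RS xs A B (zs @ C # D # ys) c a" and r2: "RS (xs @ A # B # zs) C D ys c b"
  shows "joinable a b"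
proof -
  obtain s1 j1 d1 where A: "A = (s1,j1,d1)" by (cases A) auto
  obtain s1' j1' d1' where B: "B = (s1',j1',d1')" by (cases B) auto
  obtain s2 j2 d2 where C: "C = (s2,j2,d2)" by (cases C) auto
  obtain s2' j2' d2' where D: "D = (s2',j2',d2')" by (cases D) auto
  have st': "strs c = xs @ (s1,j1,d1) # (s1',j1',d1') # zs @ (s2,j2,d2) # (s2',j2',d2') # ys"
    using st A B C D by simp
  from r1 r2 show ?thesis unfolding RS_def A B C D prod.case
    by (elim disjE conjE exE; simp only:;
        metis comm_HH[OF g st'] comm_HY[OF g st'] comm_HC[OF g st']
              comm_YH[OF g st'] comm_YY[OF g st'] comm_YC[OF g st']
              comm_CH[OF g st'] comm_CY[OF g st'] comm_CC[OF g st'])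
qed

lemma RS_ov:
  assumes g: "ginv c" and st: "strs c = xs @ A # B # C # ys"
    and r1: "RS xs A B (C # ys) c a" and r2: "RS (xs @ [A]) B C ys c b"
  shows "joinable a b"
proof -
  obtain s1 j1 d1 where A: "A = (s1,j1,d1)" by (cases A) auto
  obtain s2 j2 d2 where B: "B = (s2,j2,d2)" by (cases B) auto
  obtain s3 j3 d3 where C: "C = (s3,j3,d3)" by (cases C) auto
  have st': "strs c = xs @ (s1,j1,d1) # (s2,j2,d2) # (s3,j3,d3) # ys"
    using st A B C by simp
  from r1 r2 show ?thesis unfolding RS_def A B C prod.case
    apply (elim disjE conjE exE)
    using ov_HH[OF g st'] ov_HY[OF g st'] ov_YH[OF g st'] ov_YY[OF g st']
    by (auto simp: HS_def YS_def)
qed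

lemma list_split:
  assumes e: "xs1 @ A # B # ys1 = xs2 @ C # D # ys2" and l: "length xs1 \<le> length xs2"
  shows "(xs1 = xs2 \<and> A = C \<and> B = D \<and> ys1 = ys2) \<or> (xs2 = xs1 @ [A] \<and> B = C \<and> ys1 = D # ys2) \<or>
         (\<exists>zs. xs2 = xs1 @ A # B # zs \<and> ys1 = zs @ C # D # ys2)"
proof -
  obtain us where u: "xs1 = xs2 @ us \<and> us @ A # B # ys1 = C # D # ys2 \<or> xs1 @ us = xs2 \<and> A # B # ys1 = us @ C # D # ys2"
    using e by (auto simp: append_eq_append_conv2)
  then have u2: "xs1 @ us = xs2 \<and> A # B # ys1 = us @ C # D # ys2"
  proof
    assume h: "xs1 = xs2 @ us \<and> us @ A # B # ys1 = C # D # ys2"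
    then have "us = []" using l by simp
    then show ?thesis using h by simp
  qed
  show ?thesis
  proof (cases us)
    case Nil then show ?thesis using u2 by simp
  next
    case (Cons w us')
    show ?thesis
    proof (cases us')
      case Nil then show ?thesis using u2 Cons by simp
    next
      case (Cons w2 zs)
      then show ?thesis using u2 \<open>us = w # us'\<close> by auto
    qed
  qed
qed

lemma joinable_sym: "joinable a b \<Longrightarrow> ginv a \<Longrightarrow> joinable b a"
  unfolding joinable_def using ciso_sym ginv_steps by blast

lemma lc_join: assumes g: "ginv c" and a: "gstep c a" and b: "gstep c b" shows "joinable a b"
proof -
  have main: "joinable a b" if g: "ginv c" and
     r1: "strs c = xs1 @ A # B # ys1" "RS xs1 A B ys1 c a" and
     r2: "strs c = xs2 @ C # D # ys2" "RS xs2 C D ys2 c b" and l: "length xs1 \<le> length xs2"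
     for xs1 A B ys1 xs2 C D ys2 a b
  proof -
    have "xs1 @ A # B # ys1 = xs2 @ C # D # ys2" using r1 r2 by simp
    from list_split[OF this l] show ?thesis
    proof (elim disjE conjE exE)
      assume "xs1 = xs2" "A = C" "B = D" "ys1 = ys2"
      then have "a = b" using RS_same r1 r2 by simp
      then show ?thesis unfolding joinable_def using ciso_refl by blast
    next
      assume h: "xs2 = xs1 @ [A]" "B = C" "ys1 = D # ys2"
      have st: "strs c = xs1 @ A # B # D # ys2" using r1 h by simp
      show ?thesis using RS_ov[OF g st] r1(2) r2(2) h by simp
    next
      fix zs assume h: "xs2 = xs1 @ A # B # zs" "ys1 = zs @ C # D # ys2"
      have st: "strs c = xs1 @ A # B # zs @ C # D # ys2" using r1 h by simp
      show ?thesis using RS_disj[OF g st] r1(2) r2(2) h by simp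
    qed
  qed
  obtain xs1 A B ys1 where r1: "strs c = xs1 @ A # B # ys1" "RS xs1 A B ys1 c a" using a gstep_RS by blast
  obtain xs2 C D ys2 where r2: "strs c = xs2 @ C # D # ys2" "RS xs2 C D ys2 c b" using b gstep_RS by blast
  show ?thesis
  proof (cases "length xs1 \<le> length xs2")
    case True then show ?thesis using main[OF g r1 r2] by blast
  next
    case False
    then have "joinable b a" using main[OF g r2 r1] by simp
    moreover have "ginv b" using ginv_step g b by blast
    ultimately show ?thesis using joinable_sym by blast
  qed
qed

lemma lc: "ginv c \<Longrightarrow> gstep c a \<Longrightarrow> gstep c b \<Longrightarrow> \<exists>a' b'. gstep\<^sup>*\<^sup>* a a' \<and> gstep\<^sup>*\<^sup>* b b' \<and> ciso a' b'"
  using lc_join unfolding joinable_def by blast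

lemma newman:
  "ginv c \<Longrightarrow> gstep\<^sup>*\<^sup>* c c1 \<Longrightarrow> gfinal c1 \<Longrightarrow> gstep\<^sup>*\<^sup>* c c2 \<Longrightarrow> gfinal c2 \<Longrightarrow> ciso c1 c2"
proof (induction c arbitrary: c1 c2 rule: wf_induct[OF wf_R])
  case (1 c)
  show ?case
  proof (cases "c1 = c \<or> c2 = c")
    case True
    then have "gfinal c" using 1 by auto
    then have "c1 = c" "c2 = c" using 1
      by (metis converse_rtranclpE gfinal_def)+
    then show ?thesis using ciso_refl by simp
  next
    case False
    obtain a where a: "gstep c a" "gstep\<^sup>*\<^sup>* a c1" using 1 False by (metis converse_rtranclpE)
    obtain b where b: "gstep c b" "gstep\<^sup>*\<^sup>* b c2" using 1 False by (metis converse_rtranclpE)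
    obtain a' b' where j: "gstep\<^sup>*\<^sup>* a a'" "gstep\<^sup>*\<^sup>* b b'" "ciso a' b'" using lc[OF 1(2) a(1) b(1)] by blast
    have ga: "ginv a" and gb: "ginv b" using ginv_step 1(2) a b by blast+
    have ga': "ginv a'" and gb': "ginv b'" using ginv_steps ga gb j by blast+
    obtain d where d: "gstep\<^sup>*\<^sup>* a' d" "gfinal d" using nf_exists ga' by blast
    have gd: "ginv d" using ginv_steps ga' d by blast
    have Ra: "(a, c) \<in> R" and Rb: "(b, c) \<in> R" using 1(2) a b by (auto simp: R_def)
    have i1: "ciso c1 d" using 1(1)[rule_format, OF Ra, of c1 d] ga a d j 1(4)
      by (meson rtranclp_trans)
    obtain d' where d': "gstep\<^sup>*\<^sup>* b' d'" "ciso d d'"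
      using ciso_steps[OF d(1) ga' gb' j(3)] by blast
    have gd': "ginv d'" using ginv_steps gb' d' by blast
    have fd': "gfinal d'" using ciso_final[OF gd gd' d'(2) d(2)] .
    have i2: "ciso c2 d'" using 1(1)[rule_format, OF Rb, of c2 d'] gb b d' fd' j 1(6)
      by (meson rtranclp_trans)
    have gc2: "ginv c2" using ginv_steps gb b by blast
    show ?thesis using ciso_trans[OF ciso_trans[OF i1 d'(2)] ciso_sym[OF gc2 i2]] .
  qed
qed

theorem lemma2:
  fixes S :: "bool list" and J :: "int list" and c1 c2 :: cfg
  assumes "length S = length J"
    and "set J \<subseteq> {-1, 0, 1}"
    and "gstep\<^sup>*\<^sup>* (ginit S J) c1" and "gfinal c1"
    and "gstep\<^sup>*\<^sup>* (ginit S J) c2" and "gfinal c2"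
  shows "web_iso (close_web c1) (close_web c2)"
proof -
  have g: "ginv (ginit S J)" using ginv_init assms(1,2) by blast
  have "ciso c1 c2" using newman[OF g assms(3-6)] .
  moreover have "ginv c1" "ginv c2" using ginv_steps g assms(3,5) by blast+
  ultimately show ?thesis using close_iso by blast
qed

end
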